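(* Let $\mathcal{X}$ be a finite-dimensional Hilbert space with orthonormal basis $\{|j\rangle\}$, let $\xi\in\mathcal{D}(\mathcal{X})$ and let $\Phi$ be the erasure channel $\Phi(A)=\xi\operatorname{Tr}A$ (so $\Phi(\rho)=\xi$ for every density operator $\rho$). Let $U$ be a unitary on $\mathcal{X}$ and $\Psi(\rho)=U\rho U^\dagger$. Then for every $\sigma\in\mathcal{D}(\mathcal{X})$, $$G_{\mathrm{ch}}(\Phi,\Psi;\sigma)=\operatorname{Tr}\big(\sigma^2U^\dagger\xi U\big)\le\sum_i\lambda_i^{\downarrow}\mu_i^{\downarrow},$$ where $\lambda_1^\downarrow\ge\lambda_2^\downarrow\ge\dots$ are the eigenvalues of $\xi$ and $\mu_1^\downarrow\ge\mu_2^\downarrow\ge\dots$ the eigenvalues of $\sigma$.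
   Context: $\mathcal{D}(\mathcal{X})$ is the set of density operators on $\mathcal{X}$. Superfidelity: $G(\rho_1,\rho_2)=\operatorname{Tr}(\rho_1\rho_2)+\sqrt{1-\operatorname{Tr}\rho_1^2}\sqrt{1-\operatorname{Tr}\rho_2^2}$. Channel superfidelity: $G_{\mathrm{ch}}(\Phi,\Psi;\sigma)=\inf G\big((\Phi\otimes\mathbb{1}_{\mathcal{L}(\mathcal{Z})})(\xi'),(\Psi\otimes\mathbb{1}_{\mathcal{L}(\mathcal{Z})})(\xi')\big)$ over all finite-dimensional $\mathcal{Z}$ and all pure states $\xi'$ on $\mathcal{X}\otimes\mathcal{Z}$ with $\operatorname{Tr}_{\mathcal{Z}}\xi'=\sigma$. *)

theory Defs
  imports "Jordan_Normal_Form.Char_Poly" "Jordan_Normal_Form.Schur_Decomposition"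
begin

text \<open>Finite-dimensional Hilbert spaces are modelled as C^n (standard orthonormal basis),
operators as n x n complex matrices. The composite X (x) Z with dim X = n, dim Z = m is C^(n*m),
basis vector |i> (x) |k> having index i*m+k.\<close>

definition mtrace :: "complex mat \<Rightarrow> complex" where
  "mtrace A = (\<Sum>i<dim_row A. A $$ (i,i))"

definition adj :: "complex mat \<Rightarrow> complex mat" where
  "adj A = mat (dim_col A) (dim_row A) (\<lambda>(i,j). cnj (A $$ (j,i)))"

definition unitary :: "nat \<Rightarrow> complex mat \<Rightarrow> bool" where
  "unitary n U \<longleftrightarrow> U \<in> carrier_mat n n \<and> adj U * U = 1\<^sub>m n \<and> U * adj U = 1\<^sub>m n"

definition density :: "nat \<Rightarrow> complex mat \<Rightarrow> bool" where
  "density n \<rho> \<longleftrightarrow> \<rho> \<in> carrier_mat n n \<and> adj \<rho> = \<rho> \<and>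
     (\<forall>v \<in> carrier_vec n. (\<Sum>i<n. \<Sum>j<n. cnj (v $ i) * \<rho> $$ (i,j) * v $ j) \<in> \<real> \<and>
                             0 \<le> Re (\<Sum>i<n. \<Sum>j<n. cnj (v $ i) * \<rho> $$ (i,j) * v $ j)) \<and>
     mtrace \<rho> = 1"

definition pure_state :: "nat \<Rightarrow> complex mat \<Rightarrow> bool" where
  "pure_state d \<rho> \<longleftrightarrow> (\<exists>\<psi> \<in> carrier_vec d. (\<Sum>i<d. cmod (\<psi> $ i) ^ 2) = 1 \<and>
      \<rho> = mat d d (\<lambda>(i,j). \<psi> $ i * cnj (\<psi> $ j)))"

definition ptrace_Z :: "nat \<Rightarrow> nat \<Rightarrow> complex mat \<Rightarrow> complex mat" where
  "ptrace_Z n m R = mat n n (\<lambda>(i,j). \<Sum>k<m. R $$ (i*m+k, j*m+k))"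

text \<open>(Phi (x) id_{L(Z)}) applied to R, for a map Phi : L(X) -> L(X), dim X = n, dim Z = m.
  Writing R = sum_{k,l} B_{kl} (x) |k><l|, the result is sum_{k,l} Phi(B_{kl}) (x) |k><l|.\<close>
definition ext_channel :: "(complex mat \<Rightarrow> complex mat) \<Rightarrow> nat \<Rightarrow> nat \<Rightarrow> complex mat \<Rightarrow> complex mat" where
  "ext_channel \<Phi> n m R = mat (n*m) (n*m) (\<lambda>(p,q).
      \<Phi> (mat n n (\<lambda>(i,j). R $$ (i*m + p mod m, j*m + q mod m))) $$ (p div m, q div m))"

definition superfidelity :: "complex mat \<Rightarrow> complex mat \<Rightarrow> real" where
  "superfidelity \<rho>1 \<rho>2 = Re (mtrace (\<rho>1 * \<rho>2))
     + sqrt (1 - Re (mtrace (\<rho>1 * \<rho>1))) * sqrt (1 - Re (mtrace (\<rho>2 * \<rho>2)))"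

definition channel_superfidelity ::
  "nat \<Rightarrow> (complex mat \<Rightarrow> complex mat) \<Rightarrow> (complex mat \<Rightarrow> complex mat) \<Rightarrow> complex mat \<Rightarrow> real" where
  "channel_superfidelity n \<Phi> \<Psi> \<sigma> = Inf {superfidelity (ext_channel \<Phi> n m \<xi>') (ext_channel \<Psi> n m \<xi>') |
      m \<xi>'. pure_state (n*m) \<xi>' \<and> ptrace_Z n m \<xi>' = \<sigma>}"

definition eigenvalues_desc :: "nat \<Rightarrow> complex mat \<Rightarrow> real list \<Rightarrow> bool" where
  "eigenvalues_desc n A lam \<longleftrightarrow> A \<in> carrier_mat n n \<and> length lam = n \<and> sorted_wrt (\<ge>) lam \<and>
     char_poly A = (\<Prod>a \<leftarrow> map complex_of_real lam. [:- a, 1:])"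

end

theory Submission
  imports Defs
begin

lemma mult_entry:
  assumes "A \<in> carrier_mat n k" "B \<in> carrier_mat k m" "i < n" "j < m"
  shows "(A * B) $$ (i,j) = (\<Sum>a<k. A $$ (i,a) * B $$ (a,j))"
  using assms by (auto simp: scalar_prod_def lessThan_atLeast0 intro!: sum.cong)

lemma sum_split_mult:
  fixes n m :: nat and f :: "nat \<Rightarrow> 'a::comm_monoid_add"
  shows "(\<Sum>p<n*m. f p) = (\<Sum>i<n. \<Sum>k<m. f (i*m+k))"
proof -
  have "(\<Sum>p<n*m. f p) = (\<Sum>i<n. sum f {i*m..<i*m+m})" using sum.nat_group[where g=f and k=m and n=n] by simp
  also have "\<dots> = (\<Sum>i<n. \<Sum>k<m. f (i*m+k))"
  proof (rule sum.cong[OF refl])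
    fix i
    show "sum f {i*m..<i*m+m} = (\<Sum>k<m. f (i*m+k))"
      using sum.shift_bounds_nat_ivl[of f 0 "i*m" m]
      by (simp add: lessThan_atLeast0 add.commute)
  qed
  finally show ?thesis .
qed

lemma cnj_mult_self: "cnj z * z = complex_of_real ((cmod z)^2)"
  by (metis complex_norm_square mult.commute)

lemma re_cnj_mult: "Re (cnj z * z) = (cmod z)^2"
  by (metis Re_complex_of_real complex_norm_square mult.commute)

lemma cs_unit:
  fixes v y :: "nat \<Rightarrow> complex"
  assumes "(\<Sum>i<n. (cmod (v i))^2) = 1"
  shows "(cmod (\<Sum>i<n. cnj (v i) * y i))^2 \<le> (\<Sum>i<n. (cmod (y i))^2)"
proof -
  define c where "c = (\<Sum>i<n. cnj (v i) * y i)"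
  have vv: "(\<Sum>i<n. cnj (v i) * v i) = 1"
    using assms by (simp only: cnj_mult_self of_real_sum[symmetric]) simp
  have yv: "(\<Sum>i<n. cnj (y i) * v i) = cnj c"
    unfolding c_def by (simp add: mult.commute)
  have "(\<Sum>i<n. cnj (y i - c * v i) * (y i - c * v i)) =
     (\<Sum>i<n. cnj (y i) * y i) - cnj c * (\<Sum>i<n. cnj (v i) * y i) - c * (\<Sum>i<n. cnj (y i) * v i)
       + cnj c * c * (\<Sum>i<n. cnj (v i) * v i)"
    by (simp add: algebra_simps sum.distrib sum_subtractf sum_distrib_left)
  also have "\<dots> = (\<Sum>i<n. cnj (y i) * y i) - cnj c * c"
    using vv yv unfolding c_def[symmetric] by (simp add: algebra_simps)
  finally have eq: "(\<Sum>i<n. cnj (y i - c * v i) * (y i - c * v i)) = (\<Sum>i<n. cnj (y i) * y i) - cnj c * c" .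
  have "0 \<le> (\<Sum>i<n. (cmod (y i - c * v i))^2)" by (simp add: sum_nonneg)
  also have "(\<Sum>i<n. (cmod (y i - c * v i))^2) = Re (\<Sum>i<n. cnj (y i - c * v i) * (y i - c * v i))"
    by (simp only: Re_sum re_cnj_mult)
  also have "\<dots> = Re ((\<Sum>i<n. cnj (y i) * y i) - cnj c * c)" by (simp only: eq)
  also have "\<dots> = (\<Sum>i<n. (cmod (y i))^2) - (cmod c)^2"
    by (simp only: minus_complex.simps Re_sum re_cnj_mult)
  finally show ?thesis unfolding c_def by simp
qed

definition hm :: "nat \<Rightarrow> complex mat \<Rightarrow> bool" where
  "hm n C \<longleftrightarrow> (\<forall>i<n. \<forall>j<n. C $$ (i,j) = cnj (C $$ (j,i)))"

lemma hm_mult: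
  assumes "X \<in> carrier_mat n n" "Y \<in> carrier_mat n n" "hm n X" "hm n Y" "X * Y = Y * X"
  shows "hm n (X * Y)"
  unfolding hm_def
proof (intro allI impI)
  fix i j assume ij: "i < n" "j < n"
  have "cnj ((X*Y) $$ (j,i)) = (\<Sum>a<n. cnj (X $$ (j,a)) * cnj (Y $$ (a,i)))"
    using assms(1,2) ij by (simp del: index_mult_mat(1) add: mult_entry[of _ n n _ n])
  also have "\<dots> = (\<Sum>a<n. Y $$ (i,a) * X $$ (a,j))"
  proof (rule sum.cong[OF refl])
    fix a assume "a \<in> {..<n}"
    hence a: "a < n" by simp
    have "X $$ (a,j) = cnj (X $$ (j,a))" using assms(3) a ij unfolding hm_def by blast
    moreover have "Y $$ (i,a) = cnj (Y $$ (a,i))" using assms(4) a ij unfolding hm_def by blast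
    ultimately show "cnj (X $$ (j,a)) * cnj (Y $$ (a,i)) = Y $$ (i,a) * X $$ (a,j)" by simp
  qed
  also have "\<dots> = (Y * X) $$ (i,j)" using assms ij by (simp del: index_mult_mat(1) add: mult_entry[of _ n n _ n])
  finally show "(X*Y) $$ (i,j) = cnj ((X*Y) $$ (j,i))" using assms by simp
qed

lemma pow_comm: assumes "A \<in> carrier_mat n n" shows "A ^\<^sub>m k * A = A * A ^\<^sub>m k"
proof (induction k)
  case 0 then show ?case using assms by simp
next
  case (Suc k)
  have "A ^\<^sub>m Suc k * A = (A ^\<^sub>m k * A) * A" by simp
  also have "\<dots> = (A * A ^\<^sub>m k) * A" using Suc by simp
  also have "\<dots> = A * (A ^\<^sub>m k * A)" using assms by (simp add: assoc_mult_mat[of _ n n _ n _ n])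
  finally show ?case by simp
qed

lemma hm_pow: assumes "A \<in> carrier_mat n n" "hm n A" shows "hm n (A ^\<^sub>m k)"
proof (induction k)
  case 0 then show ?case using assms by (simp add: hm_def)
next
  case (Suc k) then show ?case using assms pow_comm[OF assms(1)] hm_mult[of "A ^\<^sub>m k" n A] by simp
qed

lemma pow_add: assumes "A \<in> carrier_mat n n" shows "A ^\<^sub>m (a + b) = A ^\<^sub>m a * A ^\<^sub>m b"
proof (induction b)
  case 0 then show ?case using assms by simp
next
  case (Suc b)
  have "A ^\<^sub>m (a + Suc b) = A ^\<^sub>m (a + b) * A" by simp
  also have "\<dots> = (A ^\<^sub>m a * A ^\<^sub>m b) * A" using Suc by simp
  also have "\<dots> = A ^\<^sub>m a * (A ^\<^sub>m b * A)" using assms by (simp add: assoc_mult_mat[of _ n n _ n _ n])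
  finally show ?case by simp
qed

lemma mtrace_comm:
  assumes "A \<in> carrier_mat n k" "B \<in> carrier_mat k n"
  shows "mtrace (A * B) = mtrace (B * A)"
proof -
  have "mtrace (A * B) = (\<Sum>i<n. \<Sum>a<k. A $$ (i,a) * B $$ (a,i))"
    unfolding mtrace_def using assms by (simp del: index_mult_mat(1) add: mult_entry[of _ n k _ n])
  also have "\<dots> = (\<Sum>a<k. \<Sum>i<n. B $$ (a,i) * A $$ (i,a))"
    by (subst sum.swap) (simp add: mult.commute)
  also have "\<dots> = mtrace (B * A)"
    unfolding mtrace_def using assms by (simp del: index_mult_mat(1) add: mult_entry[of _ k n _ k])
  finally show ?thesis .
qed

lemma ut_mult:
  assumes "A \<in> carrier_mat n n" "B \<in> carrier_mat n n" "upper_triangular A" "upper_triangular B"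
  shows "upper_triangular (A * B) \<and> (\<forall>i<n. (A*B) $$ (i,i) = A $$ (i,i) * B $$ (i,i))"
proof
  show "upper_triangular (A * B)"
  proof (rule upper_triangularI)
    fix i j assume ji: "j < i" and i: "i < dim_row (A * B)"
    have "(A * B) $$ (i,j) = (\<Sum>a<n. A $$ (i,a) * B $$ (a,j))"
      using assms ji i by (simp del: index_mult_mat(1) add: mult_entry[of _ n n _ n])
    also have "\<dots> = (\<Sum>a<n. 0)"
    proof (rule sum.cong[OF refl])
      fix a assume a: "a \<in> {..<n}"
      show "A $$ (i,a) * B $$ (a,j) = 0"
      proof (cases "a < i")
        case True
        have "A $$ (i,a) = 0" by (rule upper_triangularD[OF assms(3) True]) (use assms(1) i in simp)
        then show ?thesis by simp
      next
        case False
        hence "j < a" using ji by simp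
        have "B $$ (a,j) = 0" by (rule upper_triangularD[OF assms(4) \<open>j < a\<close>]) (use assms(2) a in simp)
        then show ?thesis by simp
      qed
    qed
    finally show "(A * B) $$ (i,j) = 0" by simp
  qed
  show "\<forall>i<n. (A*B) $$ (i,i) = A $$ (i,i) * B $$ (i,i)"
  proof (intro allI impI)
    fix i assume i: "i < n"
    have "(A * B) $$ (i,i) = (\<Sum>a<n. A $$ (i,a) * B $$ (a,i))"
      using assms i by (simp del: index_mult_mat(1) add: mult_entry[of _ n n _ n])
    also have "\<dots> = (\<Sum>a<n. if a = i then A $$ (i,i) * B $$ (i,i) else 0)"
    proof (rule sum.cong[OF refl])
      fix a assume a: "a \<in> {..<n}"
      show "A $$ (i,a) * B $$ (a,i) = (if a = i then A $$ (i,i) * B $$ (i,i) else 0)"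
      proof (cases "a < i")
        case True
        have "A $$ (i,a) = 0" by (rule upper_triangularD[OF assms(3) True]) (use assms(1) i in simp)
        then show ?thesis using True by simp
      next
        case False
        show ?thesis
        proof (cases "a = i")
          case True then show ?thesis by simp
        next
          case False2: False
          hence "i < a" using False by simp
          have "B $$ (a,i) = 0" by (rule upper_triangularD[OF assms(4) \<open>i < a\<close>]) (use assms(2) a in simp)
          then show ?thesis using False2 by simp
        qed
      qed
    qed
    also have "\<dots> = A $$ (i,i) * B $$ (i,i)" using i by simp
    finally show "(A*B) $$ (i,i) = A $$ (i,i) * B $$ (i,i)" .
  qed
qed

lemma ut_pow:
  assumes "B \<in> carrier_mat n n" "upper_triangular B"
  shows "upper_triangular (B ^\<^sub>m k) \<and> (\<forall>i<n. (B ^\<^sub>m k) $$ (i,i) = (B $$ (i,i))^k)"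
proof (induction k)
  case 0 then show ?case using assms by simp
next
  case (Suc k)
  have c: "B ^\<^sub>m k \<in> carrier_mat n n" using assms by simp
  from ut_mult[OF c assms(1) _ assms(2)] Suc
  have u: "upper_triangular (B ^\<^sub>m k * B)" and d: "\<forall>i<n. (B ^\<^sub>m k * B) $$ (i,i) = (B ^\<^sub>m k) $$ (i,i) * B $$ (i,i)"
    by blast+
  show ?case
  proof
    show "upper_triangular (B ^\<^sub>m Suc k)" using u by simp
    show "\<forall>i<n. (B ^\<^sub>m Suc k) $$ (i,i) = (B $$ (i,i))^Suc k"
    proof (intro allI impI)
      fix i assume i: "i < n"
      have "(B ^\<^sub>m Suc k) $$ (i,i) = (B ^\<^sub>m k * B) $$ (i,i)" by simp
      also have "\<dots> = (B $$ (i,i))^k * B $$ (i,i)" using d Suc i by simp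
      finally show "(B ^\<^sub>m Suc k) $$ (i,i) = (B $$ (i,i))^Suc k" by (simp only: power_Suc2)
    qed
  qed
qed

lemma trace_pow:
  assumes A: "A \<in> carrier_mat n n" and len: "length lam = n"
    and cp: "char_poly A = (\<Prod>a \<leftarrow> map complex_of_real lam. [:- a, 1:])"
  shows "mtrace (A ^\<^sub>m k) = (\<Sum>i<n. complex_of_real (lam ! i ^ k))"
proof -
  obtain B P Q where sd: "schur_decomposition A (map complex_of_real lam) = (B,P,Q)"
    by (metis prod.exhaust)
  note sdr = schur_decomposition[OF A cp sd]
  have sim: "similar_mat_wit A B P Q" using sdr by blast
  have ut: "upper_triangular B" using sdr by blast
  have dg: "diag_mat B = map complex_of_real lam" using sdr by blast
  have dA: "dim_row A = n" using A by simp
  have sim': "{A,B,P,Q} \<subseteq> carrier_mat n n \<and> P * Q = 1\<^sub>m n \<and> Q * P = 1\<^sub>m n \<and> A = P * B * Q"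
    using sim unfolding similar_mat_wit_def Let_def dA .
  have cB: "B \<in> carrier_mat n n" and cP: "P \<in> carrier_mat n n" and cQ: "Q \<in> carrier_mat n n"
    using sim' by blast+
  have QP: "Q * P = 1\<^sub>m n" using sim' by blast
  have Bii: "\<And>i. i < n \<Longrightarrow> B $$ (i,i) = complex_of_real (lam ! i)"
  proof -
    fix i assume i: "i < n"
    have "diag_mat B ! i = B $$ (i,i)" unfolding diag_mat_def using i cB by simp
    then show "B $$ (i,i) = complex_of_real (lam ! i)" using dg i len by simp
  qed
  have cBk: "B ^\<^sub>m k \<in> carrier_mat n n" using cB by (rule pow_carrier_mat)
  have cPB: "P * B ^\<^sub>m k \<in> carrier_mat n n" using cP cBk by (rule mult_carrier_mat)
  have "A ^\<^sub>m k = P * B ^\<^sub>m k * Q" by (rule similar_mat_wit_pow_id[OF sim])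
  hence "mtrace (A ^\<^sub>m k) = mtrace (P * B ^\<^sub>m k * Q)" by (rule arg_cong)
  also have "\<dots> = mtrace (Q * (P * B ^\<^sub>m k))" by (rule mtrace_comm[OF cPB cQ])
  also have "Q * (P * B ^\<^sub>m k) = (Q * P) * B ^\<^sub>m k"
    by (rule assoc_mult_mat[OF cQ cP cBk, symmetric])
  also have "\<dots> = B ^\<^sub>m k" unfolding QP by (rule left_mult_one_mat[OF cBk])
  also have "mtrace (B ^\<^sub>m k) = (\<Sum>i<n. (B ^\<^sub>m k) $$ (i,i))" unfolding mtrace_def using cB by simp
  also have "\<dots> = (\<Sum>i<n. complex_of_real (lam ! i ^ k))"
  proof (rule sum.cong[OF refl])
    fix i assume "i \<in> {..<n}" hence i: "i < n" by simp
    have "(B ^\<^sub>m k) $$ (i,i) = (B $$ (i,i))^k" using ut_pow[OF cB ut, of k] i by blast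
    thus "(B ^\<^sub>m k) $$ (i,i) = complex_of_real (lam ! i ^ k)" using Bii[OF i] by simp
  qed
  finally show ?thesis .
qed

lemma limit_pow:
  fixes x c :: real
  assumes "0 \<le> x" "0 \<le> c" "\<And>j. x ^ (2^(Suc j)) \<le> real n * c ^ (2^(Suc j))"
  shows "x \<le> c"
proof (rule ccontr)
  assume "\<not> x \<le> c" hence xc: "c < x" by simp
  show False
  proof (cases "c = 0")
    case True
    have "x ^ (2^(Suc 0)) \<le> 0" using assms(3)[of 0] True by simp
    moreover have "0 < x ^ (2^(Suc 0))" using xc True by simp
    ultimately show False by simp
  next
    case False
    hence c0: "0 < c" using assms by simp
    define d where "d = x / c - 1"
    have d0: "0 < d" using xc c0 unfolding d_def by (simp add: field_simps)
    obtain j :: nat where j: "real n < real j * d" using reals_Archimedean3[OF d0] by blast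
    define N :: nat where "N = 2^(Suc j)"
    have "j < 2^j" by (rule less_exp)
    hence jN: "j \<le> N" unfolding N_def power_Suc by linarith
    have "1 + real N * d \<le> (1 + d) ^ N" by (rule Bernoulli_inequality) (use d0 in simp)
    also have "(1 + d) = x / c" unfolding d_def by simp
    also have "(x / c) ^ N = x ^ N / c ^ N" by (simp add: power_divide)
    also have "x ^ N / c ^ N \<le> real n" using assms(3)[of j] c0 unfolding N_def
      by (simp add: divide_le_eq)
    finally have "1 + real N * d \<le> real n" .
    moreover have "real j * d \<le> real N * d" using jN d0 by (simp add: mult_right_mono)
    ultimately show False using j by simp
  qed
qed

definition qff :: "(nat \<Rightarrow> nat \<Rightarrow> complex) \<Rightarrow> nat \<Rightarrow> (nat \<Rightarrow> complex) \<Rightarrow> complex" where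
  "qff S n v = (\<Sum>i<n. \<Sum>j<n. cnj (v i) * S i j * v j)"

definition hf :: "(nat \<Rightarrow> nat \<Rightarrow> complex) \<Rightarrow> nat \<Rightarrow> bool" where
  "hf S n \<longleftrightarrow> (\<forall>i<n. \<forall>j<n. S i j = cnj (S j i))"

definition pf :: "(nat \<Rightarrow> nat \<Rightarrow> complex) \<Rightarrow> nat \<Rightarrow> bool" where
  "pf S n \<longleftrightarrow> (\<forall>v. 0 \<le> Re (qff S n v))"

lemma sum_if_k:
  fixes g :: "nat \<Rightarrow> 'a::comm_monoid_add"
  assumes "k < n" shows "(\<Sum>j<n. (if j = k then g j else 0)) = g k"
  using assms by (simp add: sum.delta)

lemma qff_expand:
  assumes h: "hf S n" and k: "k < n"
  shows "qff S n (\<lambda>i. v i + (if i = k then t else 0)) =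
     qff S n v + cnj t * (\<Sum>j<n. S k j * v j) + t * cnj (\<Sum>j<n. S k j * v j) + cnj t * t * S k k"
proof -
  define e where "e = (\<lambda>i::nat. if i = k then t else 0)"
  have ex: "\<And>i j. cnj (v i + e i) * S i j * (v j + e j) = cnj (v i) * S i j * v j + cnj (v i) * S i j * e j
     + cnj (e i) * S i j * v j + cnj (e i) * S i j * e j"
    by (simp add: algebra_simps)
  have 1: "qff S n (\<lambda>i. v i + e i) = qff S n v + (\<Sum>i<n. \<Sum>j<n. cnj (v i) * S i j * e j)
     + (\<Sum>i<n. \<Sum>j<n. cnj (e i) * S i j * v j) + (\<Sum>i<n. \<Sum>j<n. cnj (e i) * S i j * e j)"
    unfolding qff_def by (simp only: ex sum.distrib)
  have inner: "\<And>f. (\<Sum>j<n. f j * e j) = f k * t"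
  proof -
    fix f :: "nat \<Rightarrow> complex"
    have "(\<Sum>j<n. f j * e j) = (\<Sum>j<n. (if j = k then f j * t else 0))"
      unfolding e_def by (rule sum.cong) auto
    also have "\<dots> = f k * t" by (rule sum_if_k[OF k])
    finally show "(\<Sum>j<n. f j * e j) = f k * t" .
  qed
  have outer: "\<And>f. (\<Sum>i<n. cnj (e i) * f i) = cnj t * f k"
  proof -
    fix f :: "nat \<Rightarrow> complex"
    have "(\<Sum>i<n. cnj (e i) * f i) = (\<Sum>i<n. (if i = k then cnj t * f i else 0))"
      unfolding e_def by (rule sum.cong) auto
    also have "\<dots> = cnj t * f k" by (rule sum_if_k[OF k])
    finally show "(\<Sum>i<n. cnj (e i) * f i) = cnj t * f k" .
  qed
  have 2: "(\<Sum>i<n. \<Sum>j<n. cnj (v i) * S i j * e j) = t * cnj (\<Sum>j<n. S k j * v j)"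
  proof -
    have "(\<Sum>i<n. \<Sum>j<n. cnj (v i) * S i j * e j) = (\<Sum>i<n. cnj (v i) * S i k * t)"
      by (rule sum.cong[OF refl]) (rule inner)
    also have "\<dots> = (\<Sum>i<n. t * cnj (S k i * v i))"
    proof (rule sum.cong[OF refl])
      fix i assume "i \<in> {..<n}" hence i: "i < n" by simp
      have "S i k = cnj (S k i)" using h k i unfolding hf_def by blast
      thus "cnj (v i) * S i k * t = t * cnj (S k i * v i)" by simp
    qed
    finally show ?thesis by (simp add: sum_distrib_left)
  qed
  have 3: "(\<Sum>i<n. \<Sum>j<n. cnj (e i) * S i j * v j) = cnj t * (\<Sum>j<n. S k j * v j)"
  proof -
    have "(\<Sum>i<n. \<Sum>j<n. cnj (e i) * S i j * v j) = (\<Sum>i<n. cnj (e i) * (\<Sum>j<n. S i j * v j))"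
      by (simp add: sum_distrib_left mult.assoc)
    also have "\<dots> = cnj t * (\<Sum>j<n. S k j * v j)" by (rule outer)
    finally show ?thesis .
  qed
  have 4: "(\<Sum>i<n. \<Sum>j<n. cnj (e i) * S i j * e j) = cnj t * t * S k k"
  proof -
    have "(\<Sum>i<n. \<Sum>j<n. cnj (e i) * S i j * e j) = (\<Sum>i<n. cnj (e i) * S i k * t)"
      by (rule sum.cong[OF refl]) (rule inner)
    also have "\<dots> = (\<Sum>i<n. cnj (e i) * (S i k * t))" by (simp only: mult.assoc)
    also have "\<dots> = cnj t * (S k k * t)" by (rule outer)
    finally show ?thesis by (simp add: mult_ac)
  qed
  have "qff S n (\<lambda>i. v i + (if i = k then t else 0)) = qff S n (\<lambda>i. v i + e i)" unfolding e_def ..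
  also have "\<dots> = qff S n v + cnj t * (\<Sum>j<n. S k j * v j) + t * cnj (\<Sum>j<n. S k j * v j) + cnj t * t * S k k"
    unfolding 1 2 3 4 by (simp add: algebra_simps)
  finally show ?thesis .
qed

lemma hf_diag_real: assumes "hf S n" "k < n" shows "S k k = complex_of_real (Re (S k k))"
proof -
  have "S k k = cnj (S k k)" using assms unfolding hf_def by blast
  hence "Im (S k k) = 0" by (metis cnj.sel(2) neg_equal_zero)
  thus ?thesis by (simp add: complex_eq_iff)
qed

lemma pf_diag_nonneg: assumes "pf S n" "k < n" shows "0 \<le> Re (S k k)"
proof -
  have "0 \<le> Re (qff S n (\<lambda>i. if i = k then 1 else 0))" using assms unfolding pf_def by blast
  also have "qff S n (\<lambda>i. if i = k then 1 else 0) = S k k"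
  proof -
    have "qff S n (\<lambda>i. if i = k then 1 else 0) = (\<Sum>i<n. if i = k then (\<Sum>j<n. if j = k then S i j else 0) else 0)"
      unfolding qff_def
    proof (rule sum.cong[OF refl])
      fix i
      show "(\<Sum>j<n. cnj (if i = k then 1 else 0) * S i j * (if j = k then 1 else 0)) =
         (if i = k then (\<Sum>j<n. if j = k then S i j else 0) else 0)"
      proof (cases "i = k")
        case True
        have "(\<Sum>j<n. cnj (if k = k then 1 else 0) * S k j * (if j = k then 1 else 0)) = (\<Sum>j<n. if j = k then S k j else 0)"
          by (rule sum.cong) auto
        thus ?thesis unfolding True by simp
      next
        case False then show ?thesis by simp
      qed
    qed
    also have "\<dots> = (\<Sum>j<n. if j = k then S k j else 0)" by (rule sum_if_k[OF assms(2)])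
    also have "\<dots> = S k k" by (rule sum_if_k[OF assms(2)])
    finally show ?thesis .
  qed
  finally show ?thesis .
qed

lemma schur_bound:
  assumes h: "hf S n" and p: "pf S n" and k: "k < n" and r: "0 < Re (S k k)"
  shows "(cmod (\<Sum>j<n. S k j * v j))^2 / Re (S k k) \<le> Re (qff S n v)"
proof -
  define b where "b = (\<Sum>j<n. S k j * v j)"
  define r where "r = Re (S k k)"
  have skk: "S k k = complex_of_real r" unfolding r_def using hf_diag_real[OF h k] .
  define t where "t = - b / complex_of_real r"
  have r0: "r \<noteq> 0" using r unfolding r_def by simp
  have "0 \<le> Re (qff S n (\<lambda>i. v i + (if i = k then t else 0)))" using p unfolding pf_def by blast
  also have "qff S n (\<lambda>i. v i + (if i = k then t else 0)) = qff S n v - cnj b * b / complex_of_real r"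
    unfolding qff_expand[OF h k] b_def[symmetric] skk t_def using r0
    by (simp add: field_simps)
  also have "Re (qff S n v - cnj b * b / complex_of_real r) = Re (qff S n v) - (cmod b)^2 / r"
    using re_cnj_mult[of b] by (simp add: Re_divide_of_real)
  finally show ?thesis unfolding b_def r_def by simp
qed

lemma zero_diag_row:
  assumes h: "hf S n" and p: "pf S n" and k: "k < n" and z: "S k k = 0"
  shows "(\<Sum>j<n. S k j * v j) = 0"
proof (rule ccontr)
  define b where "b = (\<Sum>j<n. S k j * v j)"
  assume "(\<Sum>j<n. S k j * v j) \<noteq> 0"
  hence b0: "0 < (cmod b)^2" unfolding b_def by simp
  define q where "q = Re (qff S n v)"
  have q0: "0 \<le> q" using p unfolding pf_def q_def by blast
  define \<rho> where "\<rho> = (q + 1) / (2 * (cmod b)^2)"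
  define t where "t = - complex_of_real \<rho> * b"
  have "0 \<le> Re (qff S n (\<lambda>i. v i + (if i = k then t else 0)))" using p unfolding pf_def by blast
  also have "qff S n (\<lambda>i. v i + (if i = k then t else 0)) = qff S n v - 2 * complex_of_real \<rho> * (cnj b * b)"
    unfolding qff_expand[OF h k] b_def[symmetric] z t_def
    by (simp add: algebra_simps)
  also have "Re (qff S n v - 2 * complex_of_real \<rho> * (cnj b * b)) = q - 2 * \<rho> * (cmod b)^2"
    using re_cnj_mult[of b] unfolding q_def
    by (simp add: cnj_mult_self)
  also have "\<dots> = q - (q + 1)" unfolding \<rho>_def using b0 by (simp add: field_simps)
  finally show False by simp
qed

lemma chol_step:
  "\<forall>S. hf S n \<and> pf S n \<and> (\<forall>i<n. \<forall>j<n. (k \<le> i \<or> k \<le> j) \<longrightarrow> S i j = 0) \<longrightarrow>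
     (\<exists>M. \<forall>i<n. \<forall>j<n. S i j = (\<Sum>l<k. M i l * cnj (M j l)))"
proof (induction k)
  case 0 then show ?case by auto
next
  case (Suc k)
  show ?case
  proof (intro allI impI)
    fix S assume A: "hf S n \<and> pf S n \<and> (\<forall>i<n. \<forall>j<n. (Suc k \<le> i \<or> Suc k \<le> j) \<longrightarrow> S i j = 0)"
    hence h: "hf S n" and p: "pf S n" and zs: "\<And>i j. i < n \<Longrightarrow> j < n \<Longrightarrow> (Suc k \<le> i \<or> Suc k \<le> j) \<Longrightarrow> S i j = 0"
      by blast+
    show "\<exists>M. \<forall>i<n. \<forall>j<n. S i j = (\<Sum>l<Suc k. M i l * cnj (M j l))"
    proof (cases "k < n \<and> 0 < Re (S k k)")
      case True
      hence k: "k < n" and r: "0 < Re (S k k)" by auto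
      define r where "r = Re (S k k)"
      have skk: "S k k = complex_of_real r" unfolding r_def using hf_diag_real[OF h k] .
      define u where "u = (\<lambda>i. S i k / complex_of_real (sqrt r))"
      define S' where "S' = (\<lambda>i j. S i j - u i * cnj (u j))"
      have sr: "complex_of_real (sqrt r) * complex_of_real (sqrt r) = complex_of_real r"
      proof -
        have "sqrt r * sqrt r = r" using r unfolding r_def by simp
        thus ?thesis by (simp flip: of_real_mult)
      qed
      have sr0: "complex_of_real (sqrt r) \<noteq> 0" using r unfolding r_def by simp
      have ucnj: "\<And>i. i < n \<Longrightarrow> u i * cnj (u k) = S i k"
      proof -
        fix i assume i: "i < n"
        have "u i * cnj (u k) = S i k * cnj (S k k) / (complex_of_real (sqrt r) * complex_of_real (sqrt r))"
          unfolding u_def by simp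
        also have "\<dots> = S i k" unfolding sr skk using r unfolding r_def by simp
        finally show "u i * cnj (u k) = S i k" .
      qed
      have ucnj2: "\<And>j. j < n \<Longrightarrow> u k * cnj (u j) = S k j"
      proof -
        fix j assume j: "j < n"
        have "u k * cnj (u j) = cnj (u j * cnj (u k))" by simp
        also have "\<dots> = cnj (S j k)" using ucnj[OF j] by simp
        also have "\<dots> = S k j"
        proof -
          have "S k j = cnj (S j k)" using h j k unfolding hf_def by blast
          thus ?thesis by simp
        qed
        finally show "u k * cnj (u j) = S k j" .
      qed
      have hS': "hf S' n" unfolding hf_def
      proof (intro allI impI)
        fix i j assume ij: "i < n" "j < n"
        have "S i j = cnj (S j i)" using h ij unfolding hf_def by blast
        thus "S' i j = cnj (S' j i)" unfolding S'_def by (simp add: mult.commute)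
      qed
      have pS': "pf S' n" unfolding pf_def
      proof
        fix v
        define b where "b = (\<Sum>j<n. S k j * v j)"
        define a where "a = (\<Sum>j<n. cnj (u j) * v j)"
        have a_eq: "a = b / complex_of_real (sqrt r)"
        proof -
          have "a = (\<Sum>j<n. S k j * v j / complex_of_real (sqrt r))"
            unfolding a_def u_def
          proof (rule sum.cong[OF refl])
            fix j assume "j \<in> {..<n}" hence j: "j < n" by simp
            have "S k j = cnj (S j k)" using h k j unfolding hf_def by blast
            thus "cnj (S j k / complex_of_real (sqrt r)) * v j = S k j * v j / complex_of_real (sqrt r)"
              by simp
          qed
          thus ?thesis unfolding b_def by (simp add: sum_divide_distrib)
        qed
        have "qff S' n v = qff S n v - (\<Sum>i<n. \<Sum>j<n. cnj (v i) * u i * (cnj (u j) * v j))"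
          unfolding qff_def S'_def by (simp add: algebra_simps sum_subtractf)
        also have "(\<Sum>i<n. \<Sum>j<n. cnj (v i) * u i * (cnj (u j) * v j)) = cnj a * a"
        proof -
          have ca: "cnj a = (\<Sum>i<n. cnj (v i) * u i)" unfolding a_def by (simp add: mult.commute)
          show ?thesis unfolding ca unfolding a_def by (rule sum_product[symmetric])
        qed
        finally have e: "qff S' n v = qff S n v - cnj a * a" .
        have "Re (cnj a * a) = (cmod b)^2 / r"
          unfolding re_cnj_mult a_eq using r unfolding r_def by (simp add: norm_divide power_divide)
        moreover have "(cmod b)^2 / r \<le> Re (qff S n v)"
          unfolding b_def r_def by (rule schur_bound[OF h p k r])
        ultimately show "0 \<le> Re (qff S' n v)" unfolding e by simp
      qed
      have zS': "\<forall>i<n. \<forall>j<n. (k \<le> i \<or> k \<le> j) \<longrightarrow> S' i j = 0"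
      proof (intro allI impI)
        fix i j assume ij: "i < n" "j < n" "k \<le> i \<or> k \<le> j"
        have ui: "k < i \<Longrightarrow> u i = 0" unfolding u_def using zs ij k by simp
        have uj: "k < j \<Longrightarrow> u j = 0" unfolding u_def using zs ij k by simp
        show "S' i j = 0"
        proof (cases "i = k")
          case True then show ?thesis unfolding S'_def using ucnj2[OF ij(2)] by simp
        next
          case False
          show ?thesis
          proof (cases "j = k")
            case True then show ?thesis unfolding S'_def using ucnj[OF ij(1)] by simp
          next
            case False2: False
            then show ?thesis unfolding S'_def using False ij ui uj zs by auto
          qed
        qed
      qed
      obtain M where M: "\<forall>i<n. \<forall>j<n. S' i j = (\<Sum>l<k. M i l * cnj (M j l))"
        using Suc.IH hS' pS' zS' by blast
      define M' where "M' = (\<lambda>i l. if l = k then u i else M i l)"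
      show ?thesis
      proof (intro exI allI impI)
        fix i j assume ij: "i < n" "j < n"
        have "(\<Sum>l<Suc k. M' i l * cnj (M' j l)) = (\<Sum>l<k. M i l * cnj (M j l)) + u i * cnj (u j)"
          unfolding M'_def by simp
        also have "\<dots> = S i j"
        proof -
          have e: "S i j - u i * cnj (u j) = (\<Sum>l<k. M i l * cnj (M j l))" using M ij unfolding S'_def by blast
          thus ?thesis by (simp add: diff_eq_eq)
        qed
        finally show "S i j = (\<Sum>l<Suc k. M' i l * cnj (M' j l))" by simp
      qed
    next
      case False
      have zS: "\<forall>i<n. \<forall>j<n. (k \<le> i \<or> k \<le> j) \<longrightarrow> S i j = 0"
      proof (intro allI impI)
        fix i j assume ij: "i < n" "j < n" "k \<le> i \<or> k \<le> j"
        show "S i j = 0"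
        proof (cases "i = k \<or> j = k")
          case True
          hence k: "k < n" using ij by auto
          have "S k k = 0"
          proof -
            have "Re (S k k) = 0" using False k pf_diag_nonneg[OF p k] by simp
            thus ?thesis using hf_diag_real[OF h k] by simp
          qed
          hence row: "\<And>j. j < n \<Longrightarrow> S k j = 0"
          proof -
            fix j assume j: "j < n"
            have "(\<Sum>l<n. S k l * (if l = j then 1 else 0)) = 0"
              by (rule zero_diag_row[OF h p k \<open>S k k = 0\<close>])
            thus "S k j = 0" using j by (simp add: if_distrib sum.delta cong: if_cong)
          qed
          show ?thesis
          proof (cases "i = k")
            case True then show ?thesis using row ij by simp
          next
            case False
            hence "j = k" using \<open>i = k \<or> j = k\<close> by simp
            have "S i j = cnj (S j i)" using h ij unfolding hf_def by blast
            then show ?thesis using row ij \<open>j = k\<close> by simp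
          qed
        next
          case False
          then show ?thesis using zs ij by auto
        qed
      qed
      obtain M where M: "\<forall>i<n. \<forall>j<n. S i j = (\<Sum>l<k. M i l * cnj (M j l))"
        using Suc.IH h p zS by blast
      define M' where "M' = (\<lambda>i l. if l = k then 0 else M i l)"
      show ?thesis
      proof (intro exI allI impI)
        fix i j assume ij: "i < n" "j < n"
        show "S i j = (\<Sum>l<Suc k. M' i l * cnj (M' j l))"
          unfolding M'_def using M ij by simp
      qed
    qed
  qed
qed

lemma chol:
  assumes "hf S n" "pf S n"
  shows "\<exists>M. \<forall>i<n. \<forall>j<n. S i j = (\<Sum>l<n. M i l * cnj (M j l))"
  using chol_step[of n n] assms by auto

lemma adj_carrier: "U \<in> carrier_mat n n \<Longrightarrow> adj U \<in> carrier_mat n n"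
  unfolding adj_def by simp

lemma adj_entry: "U \<in> carrier_mat n n \<Longrightarrow> i < n \<Longrightarrow> j < n \<Longrightarrow> adj U $$ (i,j) = cnj (U $$ (j,i))"
  unfolding adj_def by simp

lemma idx_lt: assumes "i < n" "k < (m::nat)" shows "i*m+k < n*m"
proof -
  have "i*m+k < Suc i * m" using assms by simp
  also have "\<dots> \<le> n*m" using mult_le_mono1[of "Suc i" n m] assms by simp
  finally show ?thesis .
qed

lemma idx_div: "k < (m::nat) \<Longrightarrow> (i*m+k) div m = i" by simp
lemma idx_mod: "k < (m::nat) \<Longrightarrow> (i*m+k) mod m = k" by simp

lemma reorder5:
  fixes H :: "nat \<Rightarrow> nat \<Rightarrow> nat \<Rightarrow> nat \<Rightarrow> nat \<Rightarrow> complex"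
  shows "(\<Sum>i<n. \<Sum>k<m. \<Sum>j<n. \<Sum>l<m. \<Sum>a<n. H a i j k l) = (\<Sum>a<n. \<Sum>i<n. \<Sum>j<n. \<Sum>k<m. \<Sum>l<m. H a i j k l)"
proof -
  have "(\<Sum>i<n. \<Sum>k<m. \<Sum>j<n. \<Sum>l<m. \<Sum>a<n. H a i j k l) = (\<Sum>i<n. \<Sum>k<m. \<Sum>j<n. \<Sum>a<n. \<Sum>l<m. H a i j k l)"
    by (rule sum.cong[OF refl], rule sum.cong[OF refl], rule sum.cong[OF refl], rule sum.swap)
  also have "\<dots> = (\<Sum>i<n. \<Sum>k<m. \<Sum>a<n. \<Sum>j<n. \<Sum>l<m. H a i j k l)"
    by (rule sum.cong[OF refl], rule sum.cong[OF refl], rule sum.swap)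
  also have "\<dots> = (\<Sum>i<n. \<Sum>a<n. \<Sum>k<m. \<Sum>j<n. \<Sum>l<m. H a i j k l)"
    by (rule sum.cong[OF refl], rule sum.swap)
  also have "\<dots> = (\<Sum>a<n. \<Sum>i<n. \<Sum>k<m. \<Sum>j<n. \<Sum>l<m. H a i j k l)"
    by (rule sum.swap)
  also have "\<dots> = (\<Sum>a<n. \<Sum>i<n. \<Sum>j<n. \<Sum>k<m. \<Sum>l<m. H a i j k l)"
    by (rule sum.cong[OF refl], rule sum.cong[OF refl], rule sum.swap)
  finally show ?thesis .
qed

lemma value_lemma:
  fixes \<psi> :: "complex vec" and \<xi> U \<sigma> :: "complex mat"
  assumes cx: "\<xi> \<in> carrier_mat n n" and cU: "U \<in> carrier_mat n n" and cs: "\<sigma> \<in> carrier_mat n n"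
    and UU: "adj U * U = 1\<^sub>m n" and trs: "mtrace \<sigma> = 1"
    and cpsi: "\<psi> \<in> carrier_vec (n*m)"
    and pt: "ptrace_Z n m (mat (n*m) (n*m) (\<lambda>(i,j). \<psi> $ i * cnj (\<psi> $ j))) = \<sigma>"
  shows "superfidelity (ext_channel (\<lambda>A. mtrace A \<cdot>\<^sub>m \<xi>) n m (mat (n*m) (n*m) (\<lambda>(i,j). \<psi> $ i * cnj (\<psi> $ j))))
           (ext_channel (\<lambda>A. U * A * adj U) n m (mat (n*m) (n*m) (\<lambda>(i,j). \<psi> $ i * cnj (\<psi> $ j))))
       = Re (\<Sum>a<n. qff (\<lambda>i j. \<xi> $$ (i,j)) n (\<lambda>i. (U * \<sigma>) $$ (i,a)))"
proof -
  define R where "R = mat (n*m) (n*m) (\<lambda>(i,j). \<psi> $ i * cnj (\<psi> $ j))"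
  define P where "P = (\<lambda>i k. \<psi> $ (i*m+k))"
  define \<phi> where "\<phi> = (\<lambda>i k. \<Sum>a<n. U $$ (i,a) * P a k)"
  define \<tau> where "\<tau> = (\<lambda>k l. \<Sum>a<n. P a k * cnj (P a l))"
  define W where "W = U * \<sigma>"
  define \<rho>1 where "\<rho>1 = ext_channel (\<lambda>A. mtrace A \<cdot>\<^sub>m \<xi>) n m R"
  define \<rho>2 where "\<rho>2 = ext_channel (\<lambda>A. U * A * adj U) n m R"
  have cAU: "adj U \<in> carrier_mat n n" using cU by (rule adj_carrier)
  have cW: "W \<in> carrier_mat n n" unfolding W_def using cU cs by simp
  have Rent: "\<And>p q. p < n*m \<Longrightarrow> q < n*m \<Longrightarrow> R $$ (p,q) = \<psi> $ p * cnj (\<psi> $ q)"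
    unfolding R_def by simp
  have sig: "\<And>i j. i < n \<Longrightarrow> j < n \<Longrightarrow> \<sigma> $$ (i,j) = (\<Sum>k<m. P i k * cnj (P j k))"
  proof -
    fix i j assume ij: "i < n" "j < n"
    have "\<sigma> $$ (i,j) = ptrace_Z n m R $$ (i,j)" using pt unfolding R_def by simp
    also have "\<dots> = (\<Sum>k<m. R $$ (i*m+k, j*m+k))" unfolding ptrace_Z_def using ij by simp
    also have "\<dots> = (\<Sum>k<m. P i k * cnj (P j k))"
      unfolding P_def by (rule sum.cong[OF refl]) (simp add: Rent idx_lt ij)
    finally show "\<sigma> $$ (i,j) = (\<Sum>k<m. P i k * cnj (P j k))" .
  qed
  have Went: "\<And>i a. i < n \<Longrightarrow> a < n \<Longrightarrow> W $$ (i,a) = (\<Sum>l<m. \<phi> i l * cnj (P a l))"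
  proof -
    fix i a assume ia: "i < n" "a < n"
    have "W $$ (i,a) = (\<Sum>b<n. U $$ (i,b) * \<sigma> $$ (b,a))"
      unfolding W_def using cU cs ia by (simp del: index_mult_mat(1) add: mult_entry[of _ n n _ n])
    also have "\<dots> = (\<Sum>b<n. \<Sum>l<m. U $$ (i,b) * P b l * cnj (P a l))"
      by (rule sum.cong[OF refl]) (simp add: sig ia sum_distrib_left mult.assoc)
    also have "\<dots> = (\<Sum>l<m. \<Sum>b<n. U $$ (i,b) * P b l * cnj (P a l))" by (rule sum.swap)
    also have "\<dots> = (\<Sum>l<m. \<phi> i l * cnj (P a l))"
      unfolding \<phi>_def by (simp add: sum_distrib_right)
    finally show "W $$ (i,a) = (\<Sum>l<m. \<phi> i l * cnj (P a l))" .
  qed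
  have pm: "\<And>p. p < n*m \<Longrightarrow> p div m < n \<and> p mod m < m"
  proof -
    fix p assume p: "p < n*m"
    hence m0: "0 < m" by (cases m) auto
    have "p div m < n" using p by (simp add: less_mult_imp_div_less)
    moreover have "p mod m < m" using m0 by simp
    ultimately show "p div m < n \<and> p mod m < m" by simp
  qed
  have r1: "\<And>p q. p < n*m \<Longrightarrow> q < n*m \<Longrightarrow> \<rho>1 $$ (p,q) = \<tau> (p mod m) (q mod m) * \<xi> $$ (p div m, q div m)"
  proof -
    fix p q assume pq: "p < n*m" "q < n*m"
    define B where "B = mat n n (\<lambda>(i,j). R $$ (i*m + p mod m, j*m + q mod m))"
    have "\<rho>1 $$ (p,q) = (mtrace B \<cdot>\<^sub>m \<xi>) $$ (p div m, q div m)"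
      unfolding \<rho>1_def ext_channel_def B_def using pq by simp
    also have "\<dots> = mtrace B * \<xi> $$ (p div m, q div m)" using cx pm[OF pq(1)] pm[OF pq(2)] by simp
    also have "mtrace B = \<tau> (p mod m) (q mod m)"
      unfolding mtrace_def B_def \<tau>_def P_def
      by (simp, rule sum.cong[OF refl]) (simp add: Rent idx_lt pm pq)
    finally show "\<rho>1 $$ (p,q) = \<tau> (p mod m) (q mod m) * \<xi> $$ (p div m, q div m)" .
  qed
  have r2: "\<And>p q. p < n*m \<Longrightarrow> q < n*m \<Longrightarrow> \<rho>2 $$ (p,q) = \<phi> (p div m) (p mod m) * cnj (\<phi> (q div m) (q mod m))"
  proof -
    fix p q assume pq: "p < n*m" "q < n*m"
    define B where "B = mat n n (\<lambda>(i,j). R $$ (i*m + p mod m, j*m + q mod m))"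
    define i where "i = p div m"
    define j where "j = q div m"
    have ij: "i < n" "j < n" using pm pq unfolding i_def j_def by auto
    have cB: "B \<in> carrier_mat n n" unfolding B_def by simp
    have Bent: "\<And>a b. a < n \<Longrightarrow> b < n \<Longrightarrow> B $$ (a,b) = P a (p mod m) * cnj (P b (q mod m))"
      unfolding B_def P_def using pm pq by (simp add: Rent idx_lt)
    have "\<rho>2 $$ (p,q) = (U * B * adj U) $$ (i,j)"
      unfolding \<rho>2_def ext_channel_def B_def i_def j_def using pq by simp
    also have "\<dots> = (\<Sum>b<n. (U * B) $$ (i,b) * adj U $$ (b,j))"
      by (rule mult_entry) (use cU cB cAU ij in auto)
    also have "\<dots> = (\<Sum>b<n. (\<Sum>a<n. U $$ (i,a) * B $$ (a,b)) * cnj (U $$ (j,b)))"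
      using cU cB cAU ij by (intro sum.cong refl) (simp del: index_mult_mat(1) add: mult_entry[of _ n n _ n] adj_entry)
    also have "\<dots> = (\<Sum>b<n. \<phi> i (p mod m) * (cnj (P b (q mod m)) * cnj (U $$ (j,b))))"
    proof (rule sum.cong[OF refl])
      fix b assume "b \<in> {..<n}" hence b: "b < n" by simp
      have "(\<Sum>a<n. U $$ (i,a) * B $$ (a,b)) = (\<Sum>a<n. U $$ (i,a) * P a (p mod m)) * cnj (P b (q mod m))"
        by (simp add: Bent b sum_distrib_right mult.assoc)
      thus "(\<Sum>a<n. U $$ (i,a) * B $$ (a,b)) * cnj (U $$ (j,b)) = \<phi> i (p mod m) * (cnj (P b (q mod m)) * cnj (U $$ (j,b)))"
        unfolding \<phi>_def by simp
    qed
    also have "\<dots> = \<phi> i (p mod m) * cnj (\<phi> j (q mod m))"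
      unfolding \<phi>_def by (simp add: sum_distrib_left mult.commute)
    finally show "\<rho>2 $$ (p,q) = \<phi> (p div m) (p mod m) * cnj (\<phi> (q div m) (q mod m))"
      unfolding i_def j_def .
  qed
  have c1: "\<rho>1 \<in> carrier_mat (n*m) (n*m)" unfolding \<rho>1_def ext_channel_def by simp
  have c2: "\<rho>2 \<in> carrier_mat (n*m) (n*m)" unfolding \<rho>2_def ext_channel_def by simp
  define H where "H = (\<lambda>a i j k l. cnj (\<phi> i k) * P a k * \<xi> $$ (i,j) * (\<phi> j l * cnj (P a l)))"
  have tr12: "mtrace (\<rho>1 * \<rho>2) = (\<Sum>i<n. \<Sum>k<m. \<Sum>j<n. \<Sum>l<m. \<tau> k l * \<xi> $$ (i,j) * (\<phi> j l * cnj (\<phi> i k)))"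
  proof -
    have "mtrace (\<rho>1 * \<rho>2) = (\<Sum>p<n*m. \<Sum>q<n*m. \<rho>1 $$ (p,q) * \<rho>2 $$ (q,p))"
      unfolding mtrace_def using c1 c2
      by (simp del: index_mult_mat(1) add: mult_entry[of _ "n*m" "n*m" _ "n*m"])
    also have "\<dots> = (\<Sum>p<n*m. \<Sum>q<n*m. \<tau> (p mod m) (q mod m) * \<xi> $$ (p div m, q div m) *
        (\<phi> (q div m) (q mod m) * cnj (\<phi> (p div m) (p mod m))))"
      by (intro sum.cong refl) (simp add: r1 r2)
    also have "\<dots> = (\<Sum>i<n. \<Sum>k<m. \<Sum>q<n*m. \<tau> k (q mod m) * \<xi> $$ (i, q div m) *
        (\<phi> (q div m) (q mod m) * cnj (\<phi> i k)))"
      by (subst sum_split_mult) (intro sum.cong refl, simp)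
    also have "\<dots> = (\<Sum>i<n. \<Sum>k<m. \<Sum>j<n. \<Sum>l<m. \<tau> k l * \<xi> $$ (i,j) * (\<phi> j l * cnj (\<phi> i k)))"
      by (rule sum.cong[OF refl], rule sum.cong[OF refl], subst sum_split_mult,
          rule sum.cong[OF refl], rule sum.cong[OF refl], simp)
    finally show ?thesis .
  qed
  have tr12b: "mtrace (\<rho>1 * \<rho>2) = (\<Sum>a<n. \<Sum>i<n. \<Sum>j<n. \<Sum>k<m. \<Sum>l<m. H a i j k l)"
  proof -
    have "mtrace (\<rho>1 * \<rho>2) = (\<Sum>i<n. \<Sum>k<m. \<Sum>j<n. \<Sum>l<m. \<Sum>a<n. H a i j k l)"
      unfolding tr12 H_def \<tau>_def
      by (intro sum.cong refl, simp only: sum_distrib_right, rule sum.cong, simp_all add: mult_ac)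
    also have "\<dots> = (\<Sum>a<n. \<Sum>i<n. \<Sum>j<n. \<Sum>k<m. \<Sum>l<m. H a i j k l)" by (rule reorder5)
    finally show ?thesis .
  qed
  have rhs: "(\<Sum>a<n. qff (\<lambda>i j. \<xi> $$ (i,j)) n (\<lambda>i. W $$ (i,a))) = (\<Sum>a<n. \<Sum>i<n. \<Sum>j<n. \<Sum>k<m. \<Sum>l<m. H a i j k l)"
    unfolding qff_def
  proof (intro sum.cong refl)
    fix a i j assume a: "a \<in> {..<n}" and i: "i \<in> {..<n}" and j: "j \<in> {..<n}"
    have "cnj (W $$ (i,a)) = (\<Sum>k<m. cnj (\<phi> i k) * P a k)" using Went a i by simp
    moreover have "W $$ (j,a) = (\<Sum>l<m. \<phi> j l * cnj (P a l))" using Went a j by simp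
    ultimately show "cnj (W $$ (i,a)) * \<xi> $$ (i,j) * W $$ (j,a) = (\<Sum>k<m. \<Sum>l<m. H a i j k l)"
      unfolding H_def by (simp add: sum_distrib_left sum_distrib_right mult_ac)
  qed
  have tr22: "mtrace (\<rho>2 * \<rho>2) = 1"
  proof -
    define g where "g = (\<lambda>p. \<phi> (p div m) (p mod m))"
    have "mtrace (\<rho>2 * \<rho>2) = (\<Sum>p<n*m. \<Sum>q<n*m. \<rho>2 $$ (p,q) * \<rho>2 $$ (q,p))"
      unfolding mtrace_def using c2
      by (simp del: index_mult_mat(1) add: mult_entry[of _ "n*m" "n*m" _ "n*m"])
    also have "\<dots> = (\<Sum>p<n*m. \<Sum>q<n*m. (g p * cnj (g p)) * (g q * cnj (g q)))"
      by (intro sum.cong refl) (simp add: r2 g_def mult_ac)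
    also have "\<dots> = (\<Sum>p<n*m. g p * cnj (g p)) * (\<Sum>q<n*m. g q * cnj (g q))"
      by (rule sum_product[symmetric])
    also have "(\<Sum>p<n*m. g p * cnj (g p)) = 1"
    proof -
      have "(\<Sum>p<n*m. g p * cnj (g p)) = (\<Sum>i<n. \<Sum>k<m. \<phi> i k * cnj (\<phi> i k))"
        unfolding g_def by (subst sum_split_mult) (intro sum.cong refl, simp)
      also have "\<dots> = (\<Sum>i<n. (W * adj U) $$ (i,i))"
      proof (rule sum.cong[OF refl])
        fix i assume "i \<in> {..<n}" hence i: "i < n" by simp
        have "(W * adj U) $$ (i,i) = (\<Sum>b<n. W $$ (i,b) * cnj (U $$ (i,b)))"
          using cW cAU i by (simp del: index_mult_mat(1) add: mult_entry[of _ n n _ n] adj_entry[OF cU])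
        also have "\<dots> = (\<Sum>b<n. \<Sum>k<m. \<phi> i k * (cnj (P b k) * cnj (U $$ (i,b))))"
          by (rule sum.cong[OF refl]) (simp add: Went i sum_distrib_right mult.assoc)
        also have "\<dots> = (\<Sum>k<m. \<Sum>b<n. \<phi> i k * (cnj (P b k) * cnj (U $$ (i,b))))" by (rule sum.swap)
        also have "\<dots> = (\<Sum>k<m. \<phi> i k * cnj (\<phi> i k))"
          unfolding \<phi>_def by (simp add: sum_distrib_left mult.commute)
        finally show "(\<Sum>k<m. \<phi> i k * cnj (\<phi> i k)) = (W * adj U) $$ (i,i)" by simp
      qed
      also have "\<dots> = mtrace (W * adj U)" unfolding mtrace_def using cW by simp
      also have "\<dots> = mtrace (adj U * W)" by (rule mtrace_comm[OF cW cAU])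
      also have "adj U * W = (adj U * U) * \<sigma>" unfolding W_def by (rule assoc_mult_mat[OF cAU cU cs, symmetric])
      also have "\<dots> = \<sigma>" unfolding UU using cs by simp
      finally show ?thesis using trs by simp
    qed
    finally show ?thesis by simp
  qed
  show ?thesis
    unfolding superfidelity_def R_def[symmetric] \<rho>1_def[symmetric] \<rho>2_def[symmetric] W_def[symmetric]
    unfolding tr22 tr12b rhs by simp
qed

lemma sigU_entry:
  assumes cU: "U \<in> carrier_mat n n" and cs: "\<sigma> \<in> carrier_mat n n" and hs: "hm n \<sigma>"
    and a: "a < n" and j: "j < n"
  shows "(\<sigma> * adj U) $$ (a,j) = cnj ((U * \<sigma>) $$ (j,a))"
proof -
  have cAU: "adj U \<in> carrier_mat n n" using cU by (rule adj_carrier)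
  have "(\<sigma> * adj U) $$ (a,j) = (\<Sum>b<n. \<sigma> $$ (a,b) * adj U $$ (b,j))"
    by (rule mult_entry) (use cs cAU a j in auto)
  also have "\<dots> = (\<Sum>b<n. cnj (U $$ (j,b) * \<sigma> $$ (b,a)))"
  proof (rule sum.cong[OF refl])
    fix b assume "b \<in> {..<n}" hence b: "b < n" by simp
    have "\<sigma> $$ (a,b) = cnj (\<sigma> $$ (b,a))" using hs a b unfolding hm_def by blast
    thus "\<sigma> $$ (a,b) * adj U $$ (b,j) = cnj (U $$ (j,b) * \<sigma> $$ (b,a))"
      using adj_entry[OF cU b j] by (simp add: mult.commute)
  qed
  also have "\<dots> = cnj ((U * \<sigma>) $$ (j,a))"
    using mult_entry[OF cU cs j a] by simp
  finally show ?thesis .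
qed

lemma lemmaC:
  assumes cx: "\<xi> \<in> carrier_mat n n" and cU: "U \<in> carrier_mat n n" and cs: "\<sigma> \<in> carrier_mat n n"
    and hs: "hm n \<sigma>"
  shows "mtrace (\<sigma> * \<sigma> * adj U * \<xi> * U) = (\<Sum>a<n. qff (\<lambda>i j. \<xi> $$ (i,j)) n (\<lambda>i. (U * \<sigma>) $$ (i,a)))"
proof -
  define W where "W = U * \<sigma>"
  have cAU: "adj U \<in> carrier_mat n n" using cU by (rule adj_carrier)
  have cW: "W \<in> carrier_mat n n" unfolding W_def using cU cs by simp
  have css: "\<sigma> * \<sigma> \<in> carrier_mat n n" using cs by simp
  have cssU: "\<sigma> * \<sigma> * adj U \<in> carrier_mat n n" using css cAU by simp
  have cX0: "\<sigma> * \<sigma> * adj U * \<xi> \<in> carrier_mat n n" using cssU cx by simp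
  have csU: "\<sigma> * adj U \<in> carrier_mat n n" using cs cAU by simp
  have cX: "W * (\<sigma> * adj U) \<in> carrier_mat n n" using cW csU by simp
  have "mtrace (\<sigma> * \<sigma> * adj U * \<xi> * U) = mtrace (U * (\<sigma> * \<sigma> * adj U * \<xi>))"
    by (rule mtrace_comm[OF cX0 cU])
  also have "U * (\<sigma> * \<sigma> * adj U * \<xi>) = (U * (\<sigma> * \<sigma> * adj U)) * \<xi>"
    by (rule assoc_mult_mat[OF cU cssU cx, symmetric])
  also have "U * (\<sigma> * \<sigma> * adj U) = U * (\<sigma> * (\<sigma> * adj U))"
    using assoc_mult_mat[OF cs cs cAU] by simp
  also have "\<dots> = W * (\<sigma> * adj U)" unfolding W_def by (rule assoc_mult_mat[OF cU cs csU, symmetric])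
  also have "mtrace (W * (\<sigma> * adj U) * \<xi>) = (\<Sum>i<n. \<Sum>j<n. (W * (\<sigma> * adj U)) $$ (i,j) * \<xi> $$ (j,i))"
  proof -
    have dr: "dim_row (W * (\<sigma> * adj U) * \<xi>) = n" using cX cW by simp
    show ?thesis unfolding mtrace_def dr
      by (rule sum.cong[OF refl], rule mult_entry) (use cX cx in auto)
  qed
  also have "\<dots> = (\<Sum>i<n. \<Sum>j<n. \<Sum>a<n. W $$ (i,a) * cnj (W $$ (j,a)) * \<xi> $$ (j,i))"
  proof (intro sum.cong refl)
    fix i j assume i: "i \<in> {..<n}" and j: "j \<in> {..<n}"
    have "(W * (\<sigma> * adj U)) $$ (i,j) = (\<Sum>a<n. W $$ (i,a) * (\<sigma> * adj U) $$ (a,j))"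
      by (rule mult_entry) (use cW csU i j in auto)
    also have "\<dots> = (\<Sum>a<n. W $$ (i,a) * cnj (W $$ (j,a)))"
      unfolding W_def using sigU_entry[OF cU cs hs] j by (intro sum.cong refl) auto
    finally show "(W * (\<sigma> * adj U)) $$ (i,j) * \<xi> $$ (j,i) = (\<Sum>a<n. W $$ (i,a) * cnj (W $$ (j,a)) * \<xi> $$ (j,i))"
      by (simp add: sum_distrib_right)
  qed
  also have "\<dots> = (\<Sum>i<n. \<Sum>a<n. \<Sum>j<n. W $$ (i,a) * cnj (W $$ (j,a)) * \<xi> $$ (j,i))"
    by (rule sum.cong[OF refl], rule sum.swap)
  also have "\<dots> = (\<Sum>a<n. \<Sum>i<n. \<Sum>j<n. W $$ (i,a) * cnj (W $$ (j,a)) * \<xi> $$ (j,i))"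
    by (rule sum.swap)
  also have "\<dots> = (\<Sum>a<n. \<Sum>j<n. \<Sum>i<n. W $$ (i,a) * cnj (W $$ (j,a)) * \<xi> $$ (j,i))"
    by (rule sum.cong[OF refl], rule sum.swap)
  also have "\<dots> = (\<Sum>a<n. qff (\<lambda>i j. \<xi> $$ (i,j)) n (\<lambda>i. W $$ (i,a)))"
    unfolding qff_def by (intro sum.cong refl) (simp add: mult_ac)
  finally show ?thesis unfolding W_def .
qed

lemma density_facts:
  assumes "density n \<rho>"
  shows "\<rho> \<in> carrier_mat n n" "hm n \<rho>" "hf (\<lambda>i j. \<rho> $$ (i,j)) n" "pf (\<lambda>i j. \<rho> $$ (i,j)) n"
    "\<And>f. qff (\<lambda>i j. \<rho> $$ (i,j)) n f \<in> \<real>" "mtrace \<rho> = 1"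
proof -
  show c: "\<rho> \<in> carrier_mat n n" using assms unfolding density_def by blast
  have ad: "adj \<rho> = \<rho>" using assms unfolding density_def by blast
  show h: "hm n \<rho>" unfolding hm_def
  proof (intro allI impI)
    fix i j assume ij: "i < n" "j < n"
    have "\<rho> $$ (i,j) = adj \<rho> $$ (i,j)" using ad by simp
    also have "\<dots> = cnj (\<rho> $$ (j,i))" by (rule adj_entry[OF c ij])
    finally show "\<rho> $$ (i,j) = cnj (\<rho> $$ (j,i))" .
  qed
  thus "hf (\<lambda>i j. \<rho> $$ (i,j)) n" unfolding hm_def hf_def by blast
  have q: "\<And>f. qff (\<lambda>i j. \<rho> $$ (i,j)) n f \<in> \<real> \<and> 0 \<le> Re (qff (\<lambda>i j. \<rho> $$ (i,j)) n f)"
  proof -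
    fix f :: "nat \<Rightarrow> complex"
    have v: "vec n f \<in> carrier_vec n" by simp
    have e: "(\<Sum>i<n. \<Sum>j<n. cnj (vec n f $ i) * \<rho> $$ (i,j) * vec n f $ j) = qff (\<lambda>i j. \<rho> $$ (i,j)) n f"
      unfolding qff_def by (intro sum.cong refl) simp
    from assms v have "(\<Sum>i<n. \<Sum>j<n. cnj (vec n f $ i) * \<rho> $$ (i,j) * vec n f $ j) \<in> \<real> \<and>
      0 \<le> Re (\<Sum>i<n. \<Sum>j<n. cnj (vec n f $ i) * \<rho> $$ (i,j) * vec n f $ j)"
      unfolding density_def by blast
    thus "qff (\<lambda>i j. \<rho> $$ (i,j)) n f \<in> \<real> \<and> 0 \<le> Re (qff (\<lambda>i j. \<rho> $$ (i,j)) n f)" unfolding e .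
  qed
  show "pf (\<lambda>i j. \<rho> $$ (i,j)) n" unfolding pf_def using q by blast
  show "\<And>f. qff (\<lambda>i j. \<rho> $$ (i,j)) n f \<in> \<real>" using q by blast
  show "mtrace \<rho> = 1" using assms unfolding density_def by blast
qed

lemma eig_nonneg:
  assumes d: "density n \<rho>" and e: "eigenvalues_desc n \<rho> lam" and i: "i < n"
  shows "0 \<le> lam ! i"
proof -
  have c: "\<rho> \<in> carrier_mat n n" using density_facts[OF d] by blast
  have len: "length lam = n" and cp: "char_poly \<rho> = (\<Prod>a \<leftarrow> map complex_of_real lam. [:- a, 1:])"
    using e unfolding eigenvalues_desc_def by blast+
  define x where "x = complex_of_real (lam ! i)"
  have "poly (char_poly \<rho>) x = 0"
  proof -
    have mem: "x \<in> set (map complex_of_real lam)" unfolding x_def using i len by simp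
    have "poly (char_poly \<rho>) x = prod_list (map (\<lambda>p. poly p x) (map (\<lambda>a. [:- a, 1:]) (map complex_of_real lam)))"
      unfolding cp by (simp add: poly_prod_list)
    also have "\<dots> = 0"
      using mem by (subst prod_list_zero_iff) force
    finally show ?thesis .
  qed
  hence "eigenvalue \<rho> x" using eigenvalue_root_char_poly[OF c] by simp
  then obtain v where ev: "eigenvector \<rho> v x" unfolding eigenvalue_def by blast
  have cv: "v \<in> carrier_vec n" and v0: "v \<noteq> 0\<^sub>v n" and av: "\<rho> *\<^sub>v v = x \<cdot>\<^sub>v v"
    using ev c unfolding eigenvector_def by auto
  obtain k where k: "k < n" "v $ k \<noteq> 0"
  proof -
    have "\<exists>k<n. v $ k \<noteq> 0"
    proof (rule ccontr)
      assume "\<not> (\<exists>k<n. v $ k \<noteq> 0)"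
      hence "v = 0\<^sub>v n" using cv by (intro eq_vecI) auto
      with v0 show False by simp
    qed
    thus ?thesis using that by blast
  qed
  define f where "f = (\<lambda>i. v $ i)"
  have rowv: "\<And>i. i < n \<Longrightarrow> (\<Sum>j<n. \<rho> $$ (i,j) * f j) = x * f i"
  proof -
    fix i assume i: "i < n"
    have "(\<rho> *\<^sub>v v) $ i = (\<Sum>j<n. \<rho> $$ (i,j) * f j)"
      using c cv i unfolding f_def by (simp add: scalar_prod_def lessThan_atLeast0)
    moreover have "(\<rho> *\<^sub>v v) $ i = x * f i" using av cv i unfolding f_def by simp
    ultimately show "(\<Sum>j<n. \<rho> $$ (i,j) * f j) = x * f i" by simp
  qed
  have "qff (\<lambda>i j. \<rho> $$ (i,j)) n f = (\<Sum>i<n. cnj (f i) * (\<Sum>j<n. \<rho> $$ (i,j) * f j))"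
    unfolding qff_def by (simp add: sum_distrib_left mult.assoc)
  also have "\<dots> = (\<Sum>i<n. x * (cnj (f i) * f i))"
  proof (rule sum.cong[OF refl])
    fix i assume "i \<in> {..<n}" hence i: "i < n" by simp
    show "cnj (f i) * (\<Sum>j<n. \<rho> $$ (i,j) * f j) = x * (cnj (f i) * f i)"
      by (simp only: rowv[OF i]) (simp add: mult_ac)
  qed
  also have "\<dots> = x * complex_of_real (\<Sum>i<n. (cmod (f i))^2)"
    by (simp add: sum_distrib_left cnj_mult_self)
  finally have qe: "Re (qff (\<lambda>i j. \<rho> $$ (i,j)) n f) = lam ! i * (\<Sum>i<n. (cmod (f i))^2)"
    unfolding x_def by simp
  have pos: "0 < (\<Sum>i<n. (cmod (f i))^2)"
  proof -
    have "0 < (cmod (f k))^2" using k unfolding f_def by simp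
    also have "\<dots> \<le> (\<Sum>i<n. (cmod (f i))^2)"
      by (rule member_le_sum) (use k in auto)
    finally show ?thesis .
  qed
  have "0 \<le> Re (qff (\<lambda>i j. \<rho> $$ (i,j)) n f)" using density_facts(4)[OF d] unfolding pf_def by blast
  thus ?thesis using pos unfolding qe by (simp add: zero_le_mult_iff)
qed

lemma qff_as_Cw:
  "qff (\<lambda>i j. C $$ (i,j)) n w = (\<Sum>a<n. cnj (w a) * (\<Sum>b<n. C $$ (a,b) * w b))"
  unfolding qff_def by (simp add: sum_distrib_left mult.assoc)

lemma qff_sq:
  assumes c: "C \<in> carrier_mat n n" and h: "hm n C"
  shows "qff (\<lambda>i j. (C * C) $$ (i,j)) n w
     = (\<Sum>a<n. cnj (\<Sum>b<n. C $$ (a,b) * w b) * (\<Sum>b<n. C $$ (a,b) * w b))"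
proof -
  have "qff (\<lambda>i j. (C * C) $$ (i,j)) n w = (\<Sum>i<n. \<Sum>j<n. \<Sum>a<n. cnj (w i) * C $$ (i,a) * (C $$ (a,j) * w j))"
    unfolding qff_def
  proof (intro sum.cong refl)
    fix i j assume i: "i \<in> {..<n}" and j: "j \<in> {..<n}"
    have "(C * C) $$ (i,j) = (\<Sum>a<n. C $$ (i,a) * C $$ (a,j))"
      by (rule mult_entry) (use c i j in auto)
    thus "cnj (w i) * (C * C) $$ (i,j) * w j = (\<Sum>a<n. cnj (w i) * C $$ (i,a) * (C $$ (a,j) * w j))"
      by (simp add: sum_distrib_left sum_distrib_right mult_ac)
  qed
  also have "\<dots> = (\<Sum>i<n. \<Sum>a<n. \<Sum>j<n. cnj (w i) * C $$ (i,a) * (C $$ (a,j) * w j))"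
    by (rule sum.cong[OF refl], rule sum.swap)
  also have "\<dots> = (\<Sum>a<n. \<Sum>i<n. \<Sum>j<n. cnj (w i) * C $$ (i,a) * (C $$ (a,j) * w j))"
    by (rule sum.swap)
  also have "\<dots> = (\<Sum>a<n. (\<Sum>i<n. cnj (w i) * C $$ (i,a)) * (\<Sum>j<n. C $$ (a,j) * w j))"
    by (rule sum.cong[OF refl]) (rule sum_product[symmetric])
  also have "\<dots> = (\<Sum>a<n. cnj (\<Sum>b<n. C $$ (a,b) * w b) * (\<Sum>b<n. C $$ (a,b) * w b))"
  proof (rule sum.cong[OF refl])
    fix a assume "a \<in> {..<n}" hence a: "a < n" by simp
    have "(\<Sum>i<n. cnj (w i) * C $$ (i,a)) = cnj (\<Sum>b<n. C $$ (a,b) * w b)"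
    proof -
      have "(\<Sum>i<n. cnj (w i) * C $$ (i,a)) = (\<Sum>i<n. cnj (C $$ (a,i) * w i))"
      proof (rule sum.cong[OF refl])
        fix i assume "i \<in> {..<n}" hence i: "i < n" by simp
        have "C $$ (i,a) = cnj (C $$ (a,i))" using h i a unfolding hm_def by blast
        thus "cnj (w i) * C $$ (i,a) = cnj (C $$ (a,i) * w i)" by (simp add: mult.commute)
      qed
      thus ?thesis by simp
    qed
    thus "(\<Sum>i<n. cnj (w i) * C $$ (i,a)) * (\<Sum>j<n. C $$ (a,j) * w j) =
      cnj (\<Sum>b<n. C $$ (a,b) * w b) * (\<Sum>b<n. C $$ (a,b) * w b)" by simp
  qed
  finally show ?thesis .
qed

lemma step_c:
  assumes c: "C \<in> carrier_mat n n" and h: "hm n C" and w: "(\<Sum>i<n. (cmod (w i))^2) = 1"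
  shows "(Re (qff (\<lambda>i j. C $$ (i,j)) n w))^2 \<le> Re (qff (\<lambda>i j. (C * C) $$ (i,j)) n w)"
proof -
  define y where "y = (\<lambda>a. \<Sum>b<n. C $$ (a,b) * w b)"
  have "(Re (qff (\<lambda>i j. C $$ (i,j)) n w))^2 \<le> (cmod (qff (\<lambda>i j. C $$ (i,j)) n w))^2"
  proof -
    have "\<bar>Re (qff (\<lambda>i j. C $$ (i,j)) n w)\<bar> \<le> cmod (qff (\<lambda>i j. C $$ (i,j)) n w)" by (rule abs_Re_le_cmod)
    hence "\<bar>Re (qff (\<lambda>i j. C $$ (i,j)) n w)\<bar>^2 \<le> (cmod (qff (\<lambda>i j. C $$ (i,j)) n w))^2"
      by (rule power_mono) simp
    thus ?thesis by simp
  qed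
  also have "\<dots> = (cmod (\<Sum>a<n. cnj (w a) * y a))^2" unfolding qff_as_Cw y_def ..
  also have "\<dots> \<le> (\<Sum>a<n. (cmod (y a))^2)" by (rule cs_unit[OF w])
  also have "\<dots> = Re (qff (\<lambda>i j. (C * C) $$ (i,j)) n w)"
    unfolding qff_sq[OF c h] y_def by (simp only: Re_sum re_cnj_mult)
  finally show ?thesis .
qed

lemma step_d:
  assumes c: "C \<in> carrier_mat n n" and h: "hm n C" and w: "(\<Sum>i<n. (cmod (w i))^2) = 1"
  shows "Re (qff (\<lambda>i j. (C * C) $$ (i,j)) n w) \<le> Re (mtrace (C * C))"
proof -
  have "Re (qff (\<lambda>i j. (C * C) $$ (i,j)) n w) = (\<Sum>a<n. (cmod (\<Sum>b<n. C $$ (a,b) * w b))^2)"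
    unfolding qff_sq[OF c h] by (simp only: Re_sum re_cnj_mult)
  also have "\<dots> \<le> (\<Sum>a<n. \<Sum>b<n. (cmod (C $$ (a,b)))^2)"
  proof (rule sum_mono)
    fix a assume "a \<in> {..<n}"
    have "(cmod (\<Sum>b<n. C $$ (a,b) * w b))^2 = (cmod (\<Sum>b<n. cnj (w b) * cnj (C $$ (a,b))))^2"
    proof -
      have "(\<Sum>b<n. cnj (w b) * cnj (C $$ (a,b))) = cnj (\<Sum>b<n. C $$ (a,b) * w b)" by (simp add: mult.commute)
      thus ?thesis by (metis complex_mod_cnj)
    qed
    also have "\<dots> \<le> (\<Sum>b<n. (cmod (cnj (C $$ (a,b))))^2)" by (rule cs_unit[OF w])
    finally show "(cmod (\<Sum>b<n. C $$ (a,b) * w b))^2 \<le> (\<Sum>b<n. (cmod (C $$ (a,b)))^2)" by simp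
  qed
  also have "\<dots> = Re (mtrace (C * C))"
  proof -
    have mt: "mtrace (C * C) = (\<Sum>a<n. \<Sum>b<n. cnj (C $$ (a,b)) * C $$ (a,b))"
      unfolding mtrace_def
    proof -
      have dr: "dim_row (C * C) = n" using c by simp
      show "(\<Sum>i<dim_row (C * C). (C * C) $$ (i,i)) = (\<Sum>a<n. \<Sum>b<n. cnj (C $$ (a,b)) * C $$ (a,b))"
        unfolding dr
      proof (rule sum.cong[OF refl])
        fix a assume "a \<in> {..<n}" hence a: "a < n" by simp
        have "(C * C) $$ (a,a) = (\<Sum>b<n. C $$ (a,b) * C $$ (b,a))"
          by (rule mult_entry) (use c a in auto)
        also have "\<dots> = (\<Sum>b<n. cnj (C $$ (a,b)) * C $$ (a,b))"
        proof (rule sum.cong[OF refl])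
          fix b assume "b \<in> {..<n}" hence b: "b < n" by simp
          have "C $$ (b,a) = cnj (C $$ (a,b))" using h a b unfolding hm_def by blast
          thus "C $$ (a,b) * C $$ (b,a) = cnj (C $$ (a,b)) * C $$ (a,b)" by (simp add: mult.commute)
        qed
        finally show "(C * C) $$ (a,a) = (\<Sum>b<n. cnj (C $$ (a,b)) * C $$ (a,b))" .
      qed
    qed
    show ?thesis unfolding mt by (simp only: Re_sum re_cnj_mult)
  qed
  finally show ?thesis .
qed

lemma eig_bound_unit:
  assumes d: "density n \<rho>" and e: "eigenvalues_desc n \<rho> lam" and w: "(\<Sum>i<n. (cmod (w i))^2) = 1"
  shows "Re (qff (\<lambda>i j. \<rho> $$ (i,j)) n w) \<le> lam ! 0"
proof -
  have c: "\<rho> \<in> carrier_mat n n" and h: "hm n \<rho>" using density_facts[OF d] by blast+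
  have len: "length lam = n" and cp: "char_poly \<rho> = (\<Prod>a \<leftarrow> map complex_of_real lam. [:- a, 1:])"
    and srt: "sorted_wrt (\<ge>) lam"
    using e unfolding eigenvalues_desc_def by blast+
  have n0: "0 < n" using w by (cases n) auto
  have l0: "0 \<le> lam ! 0" by (rule eig_nonneg[OF d e n0])
  have lb: "\<And>i. i < n \<Longrightarrow> 0 \<le> lam ! i \<and> lam ! i \<le> lam ! 0"
  proof -
    fix i assume i: "i < n"
    have "lam ! i \<le> lam ! 0"
    proof (cases "i = 0")
      case True then show ?thesis by simp
    next
      case False
      then show ?thesis using sorted_wrt_nth_less[OF srt, of 0 i] i len by simp
    qed
    thus "0 \<le> lam ! i \<and> lam ! i \<le> lam ! 0" using eig_nonneg[OF d e i] by simp
  qed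
  define x where "x = Re (qff (\<lambda>i j. \<rho> $$ (i,j)) n w)"
  have x0: "0 \<le> x" using density_facts(4)[OF d] unfolding pf_def x_def by blast
  have claim: "\<And>j. x ^ (2^j) \<le> Re (qff (\<lambda>a b. (\<rho> ^\<^sub>m (2^j)) $$ (a,b)) n w)"
  proof -
    fix j show "x ^ (2^j) \<le> Re (qff (\<lambda>a b. (\<rho> ^\<^sub>m (2^j)) $$ (a,b)) n w)"
    proof (induction j)
      case 0
      have "\<rho> ^\<^sub>m (2^0) = \<rho>" using c by simp
      then show ?case unfolding x_def by simp
    next
      case (Suc j)
      define C where "C = \<rho> ^\<^sub>m (2^j)"
      have cC: "C \<in> carrier_mat n n" unfolding C_def using c by simp
      have hC: "hm n C" unfolding C_def by (rule hm_pow[OF c h])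
      have CC: "\<rho> ^\<^sub>m (2^Suc j) = C * C" unfolding C_def using pow_add[OF c, of "2^j" "2^j"] by (simp add: mult_2)
      have "x ^ (2^Suc j) = (x ^ (2^j))^2" by (simp add: power_mult[symmetric] mult.commute)
      also have "\<dots> \<le> (Re (qff (\<lambda>a b. C $$ (a,b)) n w))^2"
        by (rule power_mono) (use Suc x0 in \<open>auto simp: C_def\<close>)
      also have "\<dots> \<le> Re (qff (\<lambda>a b. (C * C) $$ (a,b)) n w)" by (rule step_c[OF cC hC w])
      finally show ?case unfolding CC .
    qed
  qed
  have bound: "\<And>j. x ^ (2^Suc j) \<le> real n * (lam ! 0) ^ (2^Suc j)"
  proof -
    fix j
    define C where "C = \<rho> ^\<^sub>m (2^j)"
    have cC: "C \<in> carrier_mat n n" unfolding C_def using c by simp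
    have hC: "hm n C" unfolding C_def by (rule hm_pow[OF c h])
    have CC: "\<rho> ^\<^sub>m (2^Suc j) = C * C" unfolding C_def using pow_add[OF c, of "2^j" "2^j"] by (simp add: mult_2)
    have "x ^ (2^Suc j) \<le> Re (qff (\<lambda>a b. (C * C) $$ (a,b)) n w)" using claim[of "Suc j"] unfolding CC .
    also have "\<dots> \<le> Re (mtrace (C * C))" by (rule step_d[OF cC hC w])
    also have "\<dots> = Re (mtrace (\<rho> ^\<^sub>m (2^Suc j)))" unfolding CC ..
    also have "\<dots> = (\<Sum>i<n. lam ! i ^ (2^Suc j))" unfolding trace_pow[OF c len cp] by (simp add: Re_sum)
    also have "\<dots> \<le> (\<Sum>i<n. (lam ! 0) ^ (2^Suc j))"
      by (rule sum_mono) (use lb in \<open>auto intro: power_mono\<close>)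
    also have "\<dots> = real n * (lam ! 0) ^ (2^Suc j)" by simp
    finally show "x ^ (2^Suc j) \<le> real n * (lam ! 0) ^ (2^Suc j)" .
  qed
  show ?thesis unfolding x_def[symmetric] by (rule limit_pow[OF x0 l0 bound])
qed

lemma eig_bound:
  assumes d: "density n \<rho>" and e: "eigenvalues_desc n \<rho> lam"
  shows "Re (qff (\<lambda>i j. \<rho> $$ (i,j)) n w) \<le> lam ! 0 * (\<Sum>i<n. (cmod (w i))^2)"
proof (cases "(\<Sum>i<n. (cmod (w i))^2) = 0")
  case True
  hence "\<And>i. i < n \<Longrightarrow> w i = 0" by (simp add: sum_nonneg_eq_0_iff)
  hence "qff (\<lambda>i j. \<rho> $$ (i,j)) n w = 0" unfolding qff_def by simp
  then show ?thesis using True by simp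
next
  case False
  define s where "s = (\<Sum>i<n. (cmod (w i))^2)"
  have s0: "0 < s" using False unfolding s_def by (simp add: sum_nonneg order_le_neq_trans)
  define r where "r = sqrt s"
  have r0: "0 < r" unfolding r_def using s0 by simp
  have rr: "r * r = s" unfolding r_def using s0 by simp
  define w' where "w' = (\<lambda>i. w i / complex_of_real r)"
  have "(\<Sum>i<n. (cmod (w' i))^2) = (\<Sum>i<n. (cmod (w i))^2 / (r * r))"
    unfolding w'_def using r0 by (intro sum.cong refl) (simp add: norm_divide power_divide power2_eq_square)
  also have "\<dots> = (\<Sum>i<n. (cmod (w i))^2) / s" unfolding rr by (simp add: sum_divide_distrib[symmetric])
  also have "\<dots> = 1" using s0 unfolding s_def by simp
  finally have w1: "(\<Sum>i<n. (cmod (w' i))^2) = 1" .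
  have "qff (\<lambda>i j. \<rho> $$ (i,j)) n w' = qff (\<lambda>i j. \<rho> $$ (i,j)) n w / complex_of_real (r * r)"
    unfolding qff_def w'_def by (simp add: sum_divide_distrib)
  hence "Re (qff (\<lambda>i j. \<rho> $$ (i,j)) n w') = Re (qff (\<lambda>i j. \<rho> $$ (i,j)) n w) / s"
    unfolding rr by (simp add: Re_divide_of_real)
  moreover have "Re (qff (\<lambda>i j. \<rho> $$ (i,j)) n w') \<le> lam ! 0" by (rule eig_bound_unit[OF d e w1])
  ultimately show ?thesis using s0 unfolding s_def[symmetric] by (simp add: divide_le_eq mult.commute)
qed

lemma purif:
  assumes d: "density n \<sigma>"
  shows "\<exists>\<xi>'. pure_state (n*n) \<xi>' \<and> ptrace_Z n n \<xi>' = \<sigma>"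
proof -
  have cs: "\<sigma> \<in> carrier_mat n n" and hf: "hf (\<lambda>i j. \<sigma> $$ (i,j)) n" and pf: "pf (\<lambda>i j. \<sigma> $$ (i,j)) n"
    and trs: "mtrace \<sigma> = 1"
    using density_facts[OF d] by blast+
  obtain M where M: "\<forall>i<n. \<forall>j<n. \<sigma> $$ (i,j) = (\<Sum>l<n. M i l * cnj (M j l))"
    using chol[OF hf pf] by blast
  define \<psi> where "\<psi> = vec (n*n) (\<lambda>p. M (p div n) (p mod n))"
  define \<xi>' where "\<xi>' = mat (n*n) (n*n) (\<lambda>(i,j). \<psi> $ i * cnj (\<psi> $ j))"
  have pe: "\<And>i k. i < n \<Longrightarrow> k < n \<Longrightarrow> \<psi> $ (i*n+k) = M i k"
    unfolding \<psi>_def by (simp add: idx_lt)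
  have norm: "(\<Sum>p<n*n. (cmod (\<psi> $ p))^2) = 1"
  proof -
    have "(\<Sum>p<n*n. (cmod (\<psi> $ p))^2) = (\<Sum>i<n. \<Sum>k<n. (cmod (M i k))^2)"
      by (subst sum_split_mult) (intro sum.cong refl, simp add: pe)
    also have "\<dots> = Re (\<Sum>i<n. \<sigma> $$ (i,i))"
      unfolding Re_sum
    proof (rule sum.cong[OF refl])
      fix i assume "i \<in> {..<n}" hence i: "i < n" by simp
      have "\<sigma> $$ (i,i) = (\<Sum>k<n. cnj (M i k) * M i k)" using M i by (simp add: mult.commute)
      thus "(\<Sum>k<n. (cmod (M i k))^2) = Re (\<sigma> $$ (i,i))" by (simp only: Re_sum re_cnj_mult)
    qed
    also have "(\<Sum>i<n. \<sigma> $$ (i,i)) = mtrace \<sigma>" unfolding mtrace_def using cs by simp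
    finally show ?thesis using trs by simp
  qed
  have pt: "ptrace_Z n n \<xi>' = \<sigma>"
  proof (rule eq_matI)
    show "dim_row (ptrace_Z n n \<xi>') = dim_row \<sigma>" using cs unfolding ptrace_Z_def by simp
    show "dim_col (ptrace_Z n n \<xi>') = dim_col \<sigma>" using cs unfolding ptrace_Z_def by simp
    fix i j assume i: "i < dim_row \<sigma>" and j: "j < dim_col \<sigma>"
    hence ij: "i < n" "j < n" using cs by auto
    have "ptrace_Z n n \<xi>' $$ (i,j) = (\<Sum>k<n. \<xi>' $$ (i*n+k, j*n+k))" unfolding ptrace_Z_def using ij by simp
    also have "\<dots> = (\<Sum>k<n. M i k * cnj (M j k))"
      unfolding \<xi>'_def by (rule sum.cong[OF refl]) (simp add: idx_lt ij pe)
    also have "\<dots> = \<sigma> $$ (i,j)" using M ij by simp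
    finally show "ptrace_Z n n \<xi>' $$ (i,j) = \<sigma> $$ (i,j)" .
  qed
  have "pure_state (n*n) \<xi>'"
    unfolding pure_state_def
  proof (intro bexI conjI)
    show "\<psi> \<in> carrier_vec (n*n)" unfolding \<psi>_def by simp
    show "(\<Sum>i<n*n. (cmod (\<psi> $ i))^2) = 1" by (rule norm)
    show "\<xi>' = mat (n*n) (n*n) (\<lambda>(i,j). \<psi> $ i * cnj (\<psi> $ j))" unfolding \<xi>'_def ..
  qed
  thus ?thesis using pt by blast
qed

theorem mainTheorem5:
  fixes n :: nat and \<xi> U \<sigma> :: "complex mat" and lam mu :: "real list"
  assumes "density n \<xi>"
    and "unitary n U"
    and "density n \<sigma>"
    and "eigenvalues_desc n \<xi> lam"
    and "eigenvalues_desc n \<sigma> mu"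
  shows "complex_of_real (channel_superfidelity n (\<lambda>A. mtrace A \<cdot>\<^sub>m \<xi>) (\<lambda>A. U * A * adj U) \<sigma>)
           = mtrace (\<sigma> * \<sigma> * adj U * \<xi> * U)
       \<and> channel_superfidelity n (\<lambda>A. mtrace A \<cdot>\<^sub>m \<xi>) (\<lambda>A. U * A * adj U) \<sigma>
           \<le> (\<Sum>i<n. lam ! i * mu ! i)"
proof -
  note dx = assms(1) and uU = assms(2) and ds = assms(3) and el = assms(4) and em = assms(5)
  have cx: "\<xi> \<in> carrier_mat n n" using density_facts[OF dx] by blast
  have cs: "\<sigma> \<in> carrier_mat n n" and hs: "hm n \<sigma>" and trs: "mtrace \<sigma> = 1"
    using density_facts[OF ds] by blast+
  have cU: "U \<in> carrier_mat n n" and UU: "adj U * U = 1\<^sub>m n" using uU unfolding unitary_def by blast+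
  have cAU: "adj U \<in> carrier_mat n n" using cU by (rule adj_carrier)
  define W where "W = U * \<sigma>"
  have cW: "W \<in> carrier_mat n n" unfolding W_def using cU cs by simp
  define Tq where "Tq = (\<Sum>a<n. qff (\<lambda>i j. \<xi> $$ (i,j)) n (\<lambda>i. W $$ (i,a)))"
  have Teq: "mtrace (\<sigma> * \<sigma> * adj U * \<xi> * U) = Tq" unfolding Tq_def W_def by (rule lemmaC[OF cx cU cs hs])
  have Treal: "Tq \<in> \<real>" unfolding Tq_def by (rule sum_in_Reals) (rule density_facts(5)[OF dx])
  define S where "S = {superfidelity (ext_channel (\<lambda>A. mtrace A \<cdot>\<^sub>m \<xi>) n m \<xi>') (ext_channel (\<lambda>A. U * A * adj U) n m \<xi>') |
      m \<xi>'. pure_state (n*m) \<xi>' \<and> ptrace_Z n m \<xi>' = \<sigma>}"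
  have Seq: "S = {Re Tq}"
  proof
    show "S \<subseteq> {Re Tq}"
    proof
      fix x assume "x \<in> S"
      then obtain m \<xi>' where x: "x = superfidelity (ext_channel (\<lambda>A. mtrace A \<cdot>\<^sub>m \<xi>) n m \<xi>') (ext_channel (\<lambda>A. U * A * adj U) n m \<xi>')"
        and ps: "pure_state (n*m) \<xi>'" and pt: "ptrace_Z n m \<xi>' = \<sigma>" unfolding S_def by blast
      from ps obtain \<psi> where cpsi: "\<psi> \<in> carrier_vec (n*m)"
        and xe: "\<xi>' = mat (n*m) (n*m) (\<lambda>(i,j). \<psi> $ i * cnj (\<psi> $ j))"
        unfolding pure_state_def by blast
      have "x = Re Tq" unfolding x xe Tq_def W_def
        by (rule value_lemma[OF cx cU cs UU trs cpsi]) (use pt xe in simp)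
      thus "x \<in> {Re Tq}" by simp
    qed
    show "{Re Tq} \<subseteq> S"
    proof -
      obtain \<xi>' where ps: "pure_state (n*n) \<xi>'" and pt: "ptrace_Z n n \<xi>' = \<sigma>" using purif[OF ds] by blast
      from ps obtain \<psi> where cpsi: "\<psi> \<in> carrier_vec (n*n)"
        and xe: "\<xi>' = mat (n*n) (n*n) (\<lambda>(i,j). \<psi> $ i * cnj (\<psi> $ j))"
        unfolding pure_state_def by blast
      have "superfidelity (ext_channel (\<lambda>A. mtrace A \<cdot>\<^sub>m \<xi>) n n \<xi>') (ext_channel (\<lambda>A. U * A * adj U) n n \<xi>') = Re Tq"
        unfolding xe Tq_def W_def
        by (rule value_lemma[OF cx cU cs UU trs cpsi]) (use pt xe in simp)
      hence sf: "Re Tq = superfidelity (ext_channel (\<lambda>A. mtrace A \<cdot>\<^sub>m \<xi>) n n \<xi>') (ext_channel (\<lambda>A. U * A * adj U) n n \<xi>')" by simp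
      have "Re Tq \<in> S" unfolding S_def
        by (intro CollectI exI[of _ n] exI[of _ \<xi>'] conjI sf ps pt)
      thus ?thesis by simp
    qed
  qed
  have CS: "channel_superfidelity n (\<lambda>A. mtrace A \<cdot>\<^sub>m \<xi>) (\<lambda>A. U * A * adj U) \<sigma> = Re Tq"
    unfolding channel_superfidelity_def S_def[symmetric] Seq by simp
  have part1: "complex_of_real (channel_superfidelity n (\<lambda>A. mtrace A \<cdot>\<^sub>m \<xi>) (\<lambda>A. U * A * adj U) \<sigma>)
           = mtrace (\<sigma> * \<sigma> * adj U * \<xi> * U)"
    unfolding CS Teq using Treal by simp
  have lenl: "length lam = n" and lenm: "length mu = n"
    and cpm: "char_poly \<sigma> = (\<Prod>a \<leftarrow> map complex_of_real mu. [:- a, 1:])"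
    and srtm: "sorted_wrt (\<ge>) mu"
    using el em unfolding eigenvalues_desc_def by blast+
  have n0: "0 < n"
  proof (rule ccontr)
    assume "\<not> 0 < n" hence "n = 0" by simp
    hence "mtrace \<sigma> = 0" unfolding mtrace_def using cs by simp
    thus False using trs by simp
  qed
  have l0: "0 \<le> lam ! 0" by (rule eig_nonneg[OF dx el n0])
  have mub: "\<And>i. i < n \<Longrightarrow> 0 \<le> mu ! i \<and> mu ! i \<le> mu ! 0"
  proof -
    fix i assume i: "i < n"
    have "mu ! i \<le> mu ! 0"
    proof (cases "i = 0")
      case True then show ?thesis by simp
    next
      case False
      then show ?thesis using sorted_wrt_nth_less[OF srtm, of 0 i] i lenm by simp
    qed
    thus "0 \<le> mu ! i \<and> mu ! i \<le> mu ! 0" using eig_nonneg[OF ds em i] by simp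
  qed
  have sum_mu: "(\<Sum>i<n. mu ! i) = 1"
  proof -
    have "mtrace (\<sigma> ^\<^sub>m 1) = (\<Sum>i<n. complex_of_real (mu ! i ^ 1))" by (rule trace_pow[OF cs lenm cpm])
    moreover have "\<sigma> ^\<^sub>m 1 = \<sigma>" using cs by simp
    ultimately have "(\<Sum>i<n. complex_of_real (mu ! i)) = 1" using trs by simp
    hence "complex_of_real (\<Sum>i<n. mu ! i) = 1" by simp
    thus ?thesis using of_real_eq_1_iff by blast
  qed
  have WW: "(\<Sum>a<n. \<Sum>i<n. (cmod (W $$ (i,a)))^2) = (\<Sum>i<n. mu ! i ^ 2)"
  proof -
    have cX: "\<sigma> * adj U \<in> carrier_mat n n" using cs cAU by simp
    have "mtrace ((\<sigma> * adj U) * W) = (\<Sum>a<n. \<Sum>i<n. cnj (W $$ (i,a)) * W $$ (i,a))"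
      unfolding mtrace_def
    proof -
      have dr: "dim_row (\<sigma> * adj U * W) = n" using cX cs by simp
      show "(\<Sum>a<dim_row (\<sigma> * adj U * W). (\<sigma> * adj U * W) $$ (a,a)) = (\<Sum>a<n. \<Sum>i<n. cnj (W $$ (i,a)) * W $$ (i,a))"
        unfolding dr
      proof (rule sum.cong[OF refl])
        fix a assume "a \<in> {..<n}" hence a: "a < n" by simp
        have "(\<sigma> * adj U * W) $$ (a,a) = (\<Sum>i<n. (\<sigma> * adj U) $$ (a,i) * W $$ (i,a))"
          by (rule mult_entry) (use cX cW a in auto)
        also have "\<dots> = (\<Sum>i<n. cnj (W $$ (i,a)) * W $$ (i,a))"
          unfolding W_def using sigU_entry[OF cU cs hs a] by (intro sum.cong refl) auto
        finally show "(\<sigma> * adj U * W) $$ (a,a) = (\<Sum>i<n. cnj (W $$ (i,a)) * W $$ (i,a))" .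
      qed
    qed
    moreover have "(\<sigma> * adj U) * W = \<sigma> * \<sigma>"
    proof -
      have "(\<sigma> * adj U) * W = \<sigma> * (adj U * W)" by (rule assoc_mult_mat[OF cs cAU cW])
      also have "adj U * W = (adj U * U) * \<sigma>" unfolding W_def by (rule assoc_mult_mat[OF cAU cU cs, symmetric])
      also have "\<dots> = \<sigma>" unfolding UU using cs by simp
      finally show ?thesis .
    qed
    moreover have "\<sigma> ^\<^sub>m 2 = \<sigma> * \<sigma>" using cs by (simp add: numeral_2_eq_2)
    moreover have "mtrace (\<sigma> ^\<^sub>m 2) = (\<Sum>i<n. complex_of_real (mu ! i ^ 2))" by (rule trace_pow[OF cs lenm cpm])
    ultimately have "(\<Sum>a<n. \<Sum>i<n. cnj (W $$ (i,a)) * W $$ (i,a)) = (\<Sum>i<n. complex_of_real (mu ! i ^ 2))"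
      by simp
    hence "Re (\<Sum>a<n. \<Sum>i<n. cnj (W $$ (i,a)) * W $$ (i,a)) = Re (\<Sum>i<n. complex_of_real (mu ! i ^ 2))" by simp
    thus ?thesis by (simp only: Re_sum re_cnj_mult Re_complex_of_real)
  qed
  have "Re Tq = (\<Sum>a<n. Re (qff (\<lambda>i j. \<xi> $$ (i,j)) n (\<lambda>i. W $$ (i,a))))" unfolding Tq_def by (simp add: Re_sum)
  also have "\<dots> \<le> (\<Sum>a<n. lam ! 0 * (\<Sum>i<n. (cmod (W $$ (i,a)))^2))"
    by (rule sum_mono) (rule eig_bound[OF dx el])
  also have "\<dots> = lam ! 0 * (\<Sum>i<n. mu ! i ^ 2)" unfolding WW[symmetric] by (simp add: sum_distrib_left)
  also have "\<dots> \<le> lam ! 0 * (mu ! 0 * (\<Sum>i<n. mu ! i))"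
  proof (rule mult_left_mono[OF _ l0])
    have "(\<Sum>i<n. mu ! i ^ 2) \<le> (\<Sum>i<n. mu ! 0 * mu ! i)"
    proof (rule sum_mono)
      fix i assume "i \<in> {..<n}" hence i: "i < n" by simp
      show "mu ! i ^ 2 \<le> mu ! 0 * mu ! i" using mub[OF i] by (simp add: power2_eq_square mult_right_mono)
    qed
    thus "(\<Sum>i<n. mu ! i ^ 2) \<le> mu ! 0 * (\<Sum>i<n. mu ! i)" by (simp add: sum_distrib_left)
  qed
  also have "\<dots> = lam ! 0 * mu ! 0" using sum_mu by simp
  also have "\<dots> \<le> (\<Sum>i<n. lam ! i * mu ! i)"
  proof (rule member_le_sum)
    show "0 \<in> {..<n}" using n0 by simp
    show "finite {..<n}" by simp
    fix i assume "i \<in> {..<n} - {0}" hence i: "i < n" by simp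
    show "0 \<le> lam ! i * mu ! i" using eig_nonneg[OF dx el i] mub[OF i] by simp
  qed
  finally have part2: "Re Tq \<le> (\<Sum>i<n. lam ! i * mu ! i)" .
  show ?thesis using part1 part2 unfolding CS by simp
qed

end
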